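(* Let $p$ be a prime, $0\le a,b<p$ integers and $h(x)=(ax+b)\bmod p$. Given integers $i_2>i_1>0$, let $I=\{i_1,\dots,i_2\}$. Then $\operatorname{argmin}_{x\in I}h(x)$ can be computed in time $O(\log|I|)$.
   Context: Model of computation: Word RAM with word size at least $\log p$. $\operatorname{argmin}_{x\in I}h(x)$ denotes the smallest $y\in I$ with $h(y)=\min_{x\in I}h(x)$. *)

theory Defs
  imports Complex_Main "HOL-Computational_Algebra.Primes"
begin

text \<open>A minimal unit-cost word RAM. Memory is a map from integer addresses to
  integer words. Operands are direct addresses; Load/Store give indirect addressing.\<close>

datatype instr =
    Const int int
  | Add int int int
  | Sub int int int
  | Mul int int int
  | Div int int int          (* floor division; division by 0 yields 0 *)
  | Mod int int int
  | Load int int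
  | Store int int
  | Jlt int int nat
  | Jmp nat
  | Halt

type_synonym config = "nat \<times> (int \<Rightarrow> int)"

definition halted :: "instr list \<Rightarrow> config \<Rightarrow> bool" where
  "halted P c \<longleftrightarrow> fst c \<ge> length P \<or> P ! fst c = Halt"

fun exec :: "instr \<Rightarrow> config \<Rightarrow> config" where
  "exec (Const d k) (pc, m) = (Suc pc, m(d := k))"
| "exec (Add d s t) (pc, m) = (Suc pc, m(d := m s + m t))"
| "exec (Sub d s t) (pc, m) = (Suc pc, m(d := m s - m t))"
| "exec (Mul d s t) (pc, m) = (Suc pc, m(d := m s * m t))"
| "exec (Div d s t) (pc, m) = (Suc pc, m(d := m s div m t))"
| "exec (Mod d s t) (pc, m) = (Suc pc, m(d := m s mod m t))"
| "exec (Load d s) (pc, m) = (Suc pc, m(d := m (m s)))"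
| "exec (Store d s) (pc, m) = (Suc pc, m(m d := m s))"
| "exec (Jlt s t j) (pc, m) = (if m s < m t then j else Suc pc, m)"
| "exec (Jmp j) (pc, m) = (j, m)"
| "exec Halt c = c"

definition step :: "instr list \<Rightarrow> config \<Rightarrow> config" where
  "step P c = (if halted P c then c else exec (P ! fst c) c)"

definition run :: "instr list \<Rightarrow> nat \<Rightarrow> config \<Rightarrow> config" where
  "run P n c = (step P ^^ n) c"

definition init :: "int list \<Rightarrow> config" where
  "init xs = (0, \<lambda>i. if 0 \<le> i \<and> nat i < length xs then xs ! nat i else 0)"

definition hmod :: "int \<Rightarrow> int \<Rightarrow> int \<Rightarrow> int \<Rightarrow> int" where
  "hmod p a b x = (a * x + b) mod p"

definition argmin_on :: "(int \<Rightarrow> int) \<Rightarrow> int set \<Rightarrow> int" where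
  "argmin_on h I = (LEAST y. y \<in> I \<and> (\<forall>x\<in>I. h y \<le> h x))"

end

theory Submission
  imports Defs
begin


definition ismin :: "int \<Rightarrow> int \<Rightarrow> int \<Rightarrow> int \<Rightarrow> int \<Rightarrow> bool" where
  "ismin m A c N y \<longleftrightarrow> 0 \<le> y \<and> y \<le> N \<and> (\<forall>z. 0 \<le> z \<and> z \<le> N \<longrightarrow> hmod m A c y \<le> hmod m A c z)"

lemma reflect_ok:
  assumes "0 < m" "ismin m (m - A) ((A*N + c) mod m) N y"
  shows "ismin m A c N (N - y)"
proof -
  have eq: "hmod m (m - A) ((A*N + c) mod m) x = hmod m A c (N - x)" for x
  proof -
    have "hmod m (m - A) ((A*N + c) mod m) x = ((m - A) * x + (A*N + c)) mod m"
      unfolding hmod_def by (simp add: mod_add_right_eq)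
    also have "(m - A) * x + (A*N + c) = (A*(N-x) + c) + x * m" by (simp add: algebra_simps)
    also have "(\<dots>) mod m = (A*(N-x) + c) mod m" by simp
    finally show ?thesis unfolding hmod_def .
  qed
  have y: "0 \<le> y" "y \<le> N" and mn: "\<And>z. 0 \<le> z \<Longrightarrow> z \<le> N \<Longrightarrow> hmod m (m - A) ((A*N + c) mod m) y \<le> hmod m (m - A) ((A*N + c) mod m) z"
    using assms(2) unfolding ismin_def by auto
  { fix z assume z: "0 \<le> z" "z \<le> N"
    have "hmod m A c (N - y) \<le> hmod m A c (N - (N - z))"
      using mn[of "N - z"] z eq[of y] eq[of "N - z"] by simp
    then have "hmod m A c (N - y) \<le> hmod m A c z" by simp }
  then show ?thesis unfolding ismin_def using y by auto
qed

lemma term_ok: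
  assumes "0 < m" "0 \<le> A" "0 \<le> c" "c < m" "0 \<le> N" "(A*N + c) div m = 0"
  shows "ismin m A c N 0"
proof -
  have "0 \<le> A*N" using assms by simp
  have "A*N + c = (A*N+c) div m * m + (A*N+c) mod m" by simp
  then have lt: "A*N + c < m" using assms(6) assms(1) pos_mod_bound[of m "A*N+c"] by simp
  { fix z assume z: "0 \<le> z" "z \<le> N"
    have "A*z \<le> A*N" using z assms by (simp add: mult_left_mono)
    moreover have "0 \<le> A*z" using z assms by simp
    ultimately have "hmod m A c z = A*z + c" unfolding hmod_def using lt assms by simp
    moreover have "hmod m A c 0 = c" unfolding hmod_def using assms by simp
    ultimately have "hmod m A c 0 \<le> hmod m A c z" using \<open>0 \<le> A*z\<close> by simp }
  then show ?thesis unfolding ismin_def using assms by auto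
qed

definition yk :: "int \<Rightarrow> int \<Rightarrow> int \<Rightarrow> int \<Rightarrow> int" where
  "yk m A c k = (k*m - c + A - 1) div A"

lemma yk_props:
  assumes "0 < A" "0 < k*m - c"
  shows "k*m - c \<le> A * yk m A c k" "A * yk m A c k < k*m - c + A" "0 \<le> yk m A c k"
proof -
  define D where "D = k*m - c"
  have e: "D + A - 1 = A * ((D + A - 1) div A) + (D + A - 1) mod A" by simp
  have r: "0 \<le> (D + A - 1) mod A" "(D + A - 1) mod A < A" using assms by auto
  have y: "yk m A c k = (D + A - 1) div A" unfolding yk_def D_def by simp
  have ay: "A * yk m A c k = A * ((D + A - 1) div A)" using y by simp
  show "k*m - c \<le> A * yk m A c k" using e r ay D_def by linarith
  show "A * yk m A c k < k*m - c + A" using e r ay D_def assms by linarith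
  show "0 \<le> yk m A c k" using y assms D_def by (simp add: pos_imp_zdiv_nonneg_iff)
qed

lemma g_eq:
  assumes "0 < A"
  shows "hmod A ((-m) mod A) ((c - m) mod A) j = (c - (j+1)*m) mod A"
proof -
  have "hmod A ((-m) mod A) ((c - m) mod A) j = ((-m) mod A * j + (c - m)) mod A"
    unfolding hmod_def by (rule mod_add_right_eq)
  also have "\<dots> = ((-m) mod A * j mod A + (c - m)) mod A" by (rule mod_add_left_eq[symmetric])
  also have "\<dots> = ((-m) * j mod A + (c - m)) mod A" by (simp only: mod_mult_left_eq)
  also have "\<dots> = ((-m) * j + (c - m)) mod A" by (rule mod_add_left_eq)
  also have "(-m) * j + (c - m) = c - (j+1)*m" by (simp add: algebra_simps)
  finally show ?thesis .
qed

lemma hmod_yk: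
  assumes "0 < A" "A \<le> m" "0 < k*m - c"
  shows "hmod m A c (yk m A c k) = A * yk m A c k + c - k*m"
    and "hmod m A c (yk m A c k) = (c - k*m) mod A"
proof -
  let ?y = "yk m A c k"
  have b: "0 \<le> A * ?y + c - k*m" "A * ?y + c - k*m < A" using yk_props[OF assms(1,3)] by auto
  have "(A * ?y + c) mod m = ((A * ?y + c - k*m) + k*m) mod m" by simp
  also have "\<dots> = (A * ?y + c - k*m) mod m" by (rule mod_mult_self1)
  also have "\<dots> = A * ?y + c - k*m" using b assms(2) by (intro mod_pos_pos_trivial) auto
  finally show 1: "hmod m A c ?y = A * ?y + c - k*m" unfolding hmod_def .
  have "A * ?y + c - k*m = (c - k*m) + ?y * A" by (simp add: algebra_simps)
  then have "(A * ?y + c - k*m) mod A = (c - k*m) mod A" by (metis mod_mult_self1)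
  then have "(c - k*m) mod A = (A * ?y + c - k*m) mod A" by simp
  also have "\<dots> = A * ?y + c - k*m" using b by (intro mod_pos_pos_trivial) auto
  finally show "hmod m A c ?y = (c - k*m) mod A" using 1 by simp
qed

definition backasc :: "int \<Rightarrow> int \<Rightarrow> int \<Rightarrow> int \<Rightarrow> int" where
  "backasc m A c j = (let y1 = ((j+1)*m - c + A - 1) div A in if hmod m A c y1 < c then y1 else 0)"

lemma ascend_ok:
  assumes "0 < A" "A \<le> m" "0 \<le> c" "c < m" "0 \<le> N" "1 \<le> (A*N+c) div m"
    and j: "ismin A ((-m) mod A) ((c - m) mod A) ((A*N+c) div m - 1) j"
  shows "ismin m A c N (backasc m A c j)"
proof -
  define K where "K = (A*N+c) div m"
  have m0: "0 < m" using assms by simp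
  have KM: "K*m \<le> A*N + c" unfolding K_def
    using div_mult_mod_eq[of "A*N+c" m] pos_mod_sign[OF m0, of "A*N+c"] by linarith
  define g where "g j = hmod A ((-m) mod A) ((c - m) mod A) j" for j
  have j0: "0 \<le> j" "j \<le> K - 1" and jm: "\<And>z. 0 \<le> z \<Longrightarrow> z \<le> K - 1 \<Longrightarrow> g j \<le> g z"
    using j unfolding ismin_def g_def K_def by auto
  have pos: "0 < k*m - c" if "1 \<le> k" for k
  proof -
    have "m \<le> k*m" using that m0 by simp
    then show ?thesis using assms(4) by simp
  qed
  have ykN: "yk m A c k \<le> N" if "1 \<le> k" "k \<le> K" for k
  proof -
    have "k*m \<le> K*m" using that m0 by (simp add: mult_right_mono)
    then have "A * yk m A c k < A*N + A" using yk_props(2)[OF assms(1) pos[OF that(1)]] KM by linarith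
    then have "A * yk m A c k < A*(N+1)" by (simp add: algebra_simps)
    then have "yk m A c k < N + 1" using assms(1) by (simp add: mult_less_cancel_left)
    then show ?thesis by simp
  qed
  have hg: "hmod m A c (yk m A c k) = g (k-1)" if "1 \<le> k" for k
    using hmod_yk(2)[OF assms(1,2) pos[OF that]] g_eq[OF assms(1), of m c "k-1"] unfolding g_def by simp
  define y1 where "y1 = yk m A c (j+1)"
  have bkq: "backasc m A c j = (if hmod m A c y1 < c then y1 else 0)"
    unfolding backasc_def y1_def yk_def Let_def by simp
  have y1r: "0 \<le> y1" "y1 \<le> N" using yk_props(3)[OF assms(1) pos[of "j+1"]] ykN[of "j+1"] j0 unfolding y1_def by auto
  have hy1: "hmod m A c y1 = g j" using hg[of "j+1"] j0 unfolding y1_def by simp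
  have h0: "hmod m A c 0 = c" unfolding hmod_def using assms by simp
  have main: "min c (g j) \<le> hmod m A c z" if z: "0 \<le> z" "z \<le> N" for z
  proof -
    define k where "k = (A*z + c) div m"
    have Az: "0 \<le> A*z" "A*z \<le> A*N" using z assms(1) by (auto simp: mult_left_mono)
    have k0: "0 \<le> k" unfolding k_def using Az assms(3) m0 by (simp add: pos_imp_zdiv_nonneg_iff)
    have hz: "hmod m A c z = A*z + c - k*m" unfolding hmod_def k_def using minus_div_mult_eq_mod[of "A*z+c" m] by simp
    show ?thesis
    proof (cases "k = 0")
      case True then show ?thesis using hz Az by simp
    next
      case False
      then have k1: "1 \<le> k" using k0 by simp
      have kK: "k \<le> K" unfolding k_def K_def using Az m0 by (simp add: zdiv_mono1)
      have "k*m \<le> A*z + c" unfolding k_def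
        using div_mult_mod_eq[of "A*z+c" m] pos_mod_sign[OF m0, of "A*z+c"] by linarith
      have "A * yk m A c k < A*z + A" using yk_props(2)[OF assms(1) pos[OF k1]] \<open>k*m \<le> A*z + c\<close> by linarith
      then have "A * yk m A c k < A*(z+1)" by (simp add: algebra_simps)
      then have "yk m A c k \<le> z" using assms(1) by (simp add: mult_less_cancel_left)
      then have "A * yk m A c k \<le> A*z" using assms(1) by (simp add: mult_left_mono)
      then have "hmod m A c (yk m A c k) \<le> hmod m A c z"
        using hmod_yk(1)[OF assms(1,2) pos[OF k1]] hz by simp
      moreover have "g j \<le> g (k-1)" using jm[of "k-1"] k1 kK by simp
      ultimately show ?thesis using hg[OF k1] by simp
    qed
  qed
  show ?thesis
  proof (cases "hmod m A c y1 < c")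
    case True
    then show ?thesis unfolding bkq ismin_def using y1r main hy1 by (auto simp: min_def split: if_splits)
  next
    case False
    then show ?thesis unfolding bkq ismin_def using y1r main hy1 h0 assms(5) by (auto simp: min_def split: if_splits)
  qed
qed

lemma yk_range:
  fixes A m c N j :: int
  assumes "0 < A" "A \<le> m" "0 \<le> c" "c < m" "0 \<le> N" "0 \<le> j" "j \<le> (A*N+c) div m - 1"
  shows "0 \<le> ((j+1)*m - c + A - 1) div A" "((j+1)*m - c + A - 1) div A \<le> N"
proof -
  define K where "K = (A*N+c) div m"
  have m0: "0 < m" using assms(3,4) by linarith
  have KM: "K*m \<le> A*N + c" unfolding K_def
    using div_mult_mod_eq[of "A*N+c" m] pos_mod_sign[OF m0, of "A*N+c"] by linarith
  have pos: "0 < (j+1)*m - c"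
  proof -
    have "m \<le> (j+1)*m" using assms m0 by simp
    then show ?thesis using assms(4) by simp
  qed
  have e: "((j+1)*m - c + A - 1) div A = yk m A c (j+1)" unfolding yk_def by simp
  show "0 \<le> ((j+1)*m - c + A - 1) div A" using yk_props(3)[OF assms(1) pos] e by simp
  have "(j+1)*m \<le> K*m" using assms m0 unfolding K_def by (simp add: mult_right_mono)
  then have "A * yk m A c (j+1) < A*N + A" using yk_props(2)[OF assms(1) pos] KM by linarith
  then have "A * yk m A c (j+1) < A*(N+1)" by (simp add: algebra_simps)
  then have "yk m A c (j+1) < N + 1" using assms(1) by (simp add: mult_less_cancel_left)
  then show "((j+1)*m - c + A - 1) div A \<le> N" using e by simp
qed


definition bnd :: "int \<Rightarrow> (int \<Rightarrow> int) \<Rightarrow> bool" where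
  "bnd B mem \<longleftrightarrow> (\<forall>x. \<bar>mem x\<bar> \<le> B)"

definition reach :: "instr list \<Rightarrow> int \<Rightarrow> config \<Rightarrow> nat \<Rightarrow> (config \<Rightarrow> bool) \<Rightarrow> bool" where
  "reach P B c k Q \<longleftrightarrow> (\<exists>n\<le>k. (\<forall>t\<le>n. bnd B (snd (run P t c))) \<and> Q (run P n c))"

lemma run_0: "run P 0 c = c" by (simp add: run_def)
lemma run_Suc: "run P (Suc n) c = run P n (step P c)" unfolding run_def by (metis comp_apply funpow_Suc_right)
lemma run_add: "run P (n1 + n2) c = run P n2 (run P n1 c)"
  unfolding run_def by (metis add.commute comp_apply funpow_add)

lemma reach_done: "bnd B (snd c) \<Longrightarrow> Q c \<Longrightarrow> reach P B c k Q"
  unfolding reach_def by (rule exI[of _ 0]) (simp add: run_0)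

lemma reach_step: "0 < k \<Longrightarrow> bnd B (snd c) \<Longrightarrow> reach P B (step P c) (k - 1) Q \<Longrightarrow> reach P B c k Q"
  unfolding reach_def
proof (elim exE conjE)
  fix n assume k: "0 < k" and b: "bnd B (snd c)" and n: "n \<le> k - 1" and all: "\<forall>t\<le>n. bnd B (snd (run P t (step P c)))"
    and q: "Q (run P n (step P c))"
  show "\<exists>n\<le>k. (\<forall>t\<le>n. bnd B (snd (run P t c))) \<and> Q (run P n c)"
  proof (intro exI[of _ "Suc n"] conjI allI impI)
    show "Suc n \<le> k" using n k by simp
    fix t assume "t \<le> Suc n"
    then show "bnd B (snd (run P t c))" using all b by (cases t) (auto simp: run_0 run_Suc)
  next
    show "Q (run P (Suc n) c)" using q by (simp add: run_Suc)
  qed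
qed

lemma reach_trans:
  assumes "reach P B c k1 Q1" "\<And>c1. Q1 c1 \<Longrightarrow> reach P B c1 k2 Q2"
  shows "reach P B c (k1 + k2) Q2"
proof -
  obtain n1 where n1: "n1 \<le> k1" "\<forall>t\<le>n1. bnd B (snd (run P t c))" "Q1 (run P n1 c)"
    using assms(1) unfolding reach_def by blast
  obtain n2 where n2: "n2 \<le> k2" "\<forall>t\<le>n2. bnd B (snd (run P t (run P n1 c)))" "Q2 (run P n2 (run P n1 c))"
    using assms(2)[OF n1(3)] unfolding reach_def by blast
  show ?thesis unfolding reach_def
  proof (intro exI[of _ "n1 + n2"] conjI allI impI)
    show "n1 + n2 \<le> k1 + k2" using n1 n2 by simp
    show "Q2 (run P (n1 + n2) c)" using n2 by (simp add: run_add)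
    fix t assume t: "t \<le> n1 + n2"
    show "bnd B (snd (run P t c))"
    proof (cases "t \<le> n1")
      case True then show ?thesis using n1 by simp
    next
      case False
      define u where "u = t - n1"
      have "t = n1 + u" "u \<le> n2" using t False unfolding u_def by auto
      then show ?thesis using n2 by (simp add: run_add)
    qed
  qed
qed

lemma reach_mono: "reach P B c k Q \<Longrightarrow> k \<le> k' \<Longrightarrow> (\<And>c. Q c \<Longrightarrow> Q' c) \<Longrightarrow> reach P B c k' Q'"
  unfolding reach_def by (blast intro: order_trans)

lemma bnd_upd [simp]: "bnd B mem \<Longrightarrow> bnd B (mem(x := v)) \<longleftrightarrow> \<bar>v\<bar> \<le> B"
  unfolding bnd_def by (auto simp: fun_upd_def)

type_synonym frame = "int \<times> int \<times> int \<times> int \<times> int"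

definition stk :: "frame list \<Rightarrow> (int \<Rightarrow> int) \<Rightarrow> bool" where
  "stk fs mem \<longleftrightarrow> (\<forall>i<length fs. case fs ! i of (a0, a1, a2, a3, a4) \<Rightarrow>
      mem (100 + 5 * int i) = a0 \<and> mem (101 + 5 * int i) = a1 \<and> mem (102 + 5 * int i) = a2 \<and>
      mem (103 + 5 * int i) = a3 \<and> mem (104 + 5 * int i) = a4)"

definition common :: "int \<Rightarrow> int \<Rightarrow> frame list \<Rightarrow> (int \<Rightarrow> int) \<Rightarrow> bool" where
  "common i1 B fs mem \<longleftrightarrow> mem 20 = 0 \<and> mem 21 = 1 \<and> mem 23 = 5 \<and> mem 24 = 100 \<and> mem 3 = i1 \<and>
     stk fs mem \<and> bnd B mem"

lemma stk_same:
  assumes "stk fs mem" "\<And>x. 100 \<le> x \<Longrightarrow> x < 100 + 5 * int (length fs) \<Longrightarrow> mem' x = mem x"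
  shows "stk fs mem'"
  unfolding stk_def
proof (intro allI impI)
  fix i assume i: "i < length fs"
  obtain a0 a1 a2 a3 a4 where e: "fs ! i = (a0,a1,a2,a3,a4)" by (metis prod_cases5)
  have ii: "int i + 1 \<le> int (length fs)" using i by linarith
  have q: "mem' (j + 5 * int i) = mem (j + 5 * int i)" if "100 \<le> j" "j < 105" for j
  proof (rule assms(2))
    show "100 \<le> j + 5 * int i" using that by simp
    show "j + 5 * int i < 100 + 5 * int (length fs)" using that ii by linarith
  qed
  have o: "mem (100 + 5 * int i) = a0 \<and> mem (101 + 5 * int i) = a1 \<and> mem (102 + 5 * int i) = a2 \<and>
      mem (103 + 5 * int i) = a3 \<and> mem (104 + 5 * int i) = a4"
    using assms(1)[unfolded stk_def, rule_format, OF i] e by simp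
  show "case fs ! i of (a0, a1, a2, a3, a4) \<Rightarrow>
      mem' (100 + 5 * int i) = a0 \<and> mem' (101 + 5 * int i) = a1 \<and> mem' (102 + 5 * int i) = a2 \<and>
      mem' (103 + 5 * int i) = a3 \<and> mem' (104 + 5 * int i) = a4"
    unfolding e prod.case using o q[of 100] q[of 101] q[of 102] q[of 103] q[of 104] by simp
qed

lemma stk_pop:
  assumes "stk (fs @ [(a0,a1,a2,a3,a4)]) mem" "s = 100 + 5 * int (length fs)"
  shows "stk fs mem" "mem s = a0" "mem (s+1) = a1" "mem (s+2) = a2" "mem (s+3) = a3" "mem (s+4) = a4"
proof -
  show "stk fs mem" unfolding stk_def
  proof (intro allI impI)
    fix i assume i: "i < length fs"
    then have "i < length (fs @ [(a0,a1,a2,a3,a4)])" by simp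
    from assms(1)[unfolded stk_def, rule_format, OF this] i
    show "case fs ! i of (a0, a1, a2, a3, a4) \<Rightarrow>
      mem (100 + 5 * int i) = a0 \<and> mem (101 + 5 * int i) = a1 \<and> mem (102 + 5 * int i) = a2 \<and>
      mem (103 + 5 * int i) = a3 \<and> mem (104 + 5 * int i) = a4" by (simp add: nth_append)
  qed
  have "case (fs @ [(a0,a1,a2,a3,a4)]) ! length fs of (a0, a1, a2, a3, a4) \<Rightarrow>
      mem (100 + 5 * int (length fs)) = a0 \<and> mem (101 + 5 * int (length fs)) = a1 \<and> mem (102 + 5 * int (length fs)) = a2 \<and>
      mem (103 + 5 * int (length fs)) = a3 \<and> mem (104 + 5 * int (length fs)) = a4"
    using assms(1)[unfolded stk_def, rule_format, of "length fs"] by simp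
  moreover have "101 + 5 * int (length fs) = s+1" "102 + 5 * int (length fs) = s+2" "103 + 5 * int (length fs) = s+3" "104 + 5 * int (length fs) = s+4" "100 + 5 * int (length fs) = s"
      using assms(2) by auto
  ultimately show "mem s = a0" "mem (s+1) = a1" "mem (s+2) = a2" "mem (s+3) = a3" "mem (s+4) = a4"
    by (simp_all only: nth_append_length prod.case)
qed

lemma stk_push:
  assumes "stk fs mem" "s = 100 + 5 * int (length fs)"
    "\<And>x. 100 \<le> x \<Longrightarrow> x < s \<Longrightarrow> mem' x = mem x"
    "mem' s = a0" "mem' (s+1) = a1" "mem' (s+2) = a2" "mem' (s+3) = a3" "mem' (s+4) = a4"
  shows "stk (fs @ [(a0,a1,a2,a3,a4)]) mem'"
  unfolding stk_def
proof (intro allI impI)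
  fix i assume i: "i < length (fs @ [(a0, a1, a2, a3, a4)])"
  show "case (fs @ [(a0, a1, a2, a3, a4)]) ! i of (a0, a1, a2, a3, a4) \<Rightarrow>
      mem' (100 + 5 * int i) = a0 \<and> mem' (101 + 5 * int i) = a1 \<and> mem' (102 + 5 * int i) = a2 \<and>
      mem' (103 + 5 * int i) = a3 \<and> mem' (104 + 5 * int i) = a4"
  proof (cases "i < length fs")
    case True
    have "stk fs mem'" using stk_same[OF assms(1), of mem'] assms(2,3) by simp
    then show ?thesis using True unfolding stk_def by (auto simp: nth_append)
  next
    case False
    then have "i = length fs" using i by simp
    have "101 + 5 * int i = s+1" "102 + 5 * int i = s+2" "103 + 5 * int i = s+3" "104 + 5 * int i = s+4" "100 + 5 * int i = s"
      using assms(2) \<open>i = length fs\<close> by auto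
    then show ?thesis using assms(2,4-8) \<open>i = length fs\<close> by (simp add: nth_append)
  qed
qed


definition prog :: "instr list" where
  "prog = [
    Const 20 0,
    Const 21 1,
    Const 23 5,
    Const 24 100,
    Const 9 100,
    Jlt 20 1 8,
    Add 0 3 20,
    Halt,
    Mul 12 1 3,
    Add 12 12 2,
    Mod 7 12 0,
    Sub 8 4 3,
    Sub 13 0 21,
    Jlt 8 13 15,
    Mul 8 13 21,
    Mul 5 0 21,
    Mul 6 1 21,
    Add 12 6 6,
    Const 10 0,
    Jlt 5 12 21,
    Jmp 26,
    Const 10 1,
    Mul 12 6 8,
    Add 12 12 7,
    Mod 7 12 5,
    Sub 6 5 6,
    Mul 12 6 8,
    Add 12 12 7,
    Div 11 12 5,
    Jlt 20 11 35,
    Const 14 0,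
    Jlt 20 10 33,
    Jmp 53,
    Mul 14 8 21,
    Jmp 53,
    Store 9 5,
    Add 13 9 21,
    Store 13 6,
    Add 13 13 21,
    Store 13 7,
    Add 13 13 21,
    Store 13 8,
    Add 13 13 21,
    Store 13 10,
    Add 9 9 23,
    Sub 8 11 21,
    Sub 12 7 5,
    Mod 7 12 6,
    Sub 12 20 5,
    Mod 12 12 6,
    Mul 5 6 21,
    Mul 6 12 21,
    Jmp 17,
    Jlt 24 9 56,
    Add 0 14 3,
    Halt,
    Sub 9 9 23,
    Load 5 9,
    Add 13 9 21,
    Load 6 13,
    Add 13 13 21,
    Load 7 13,
    Add 13 13 21,
    Load 8 13,
    Add 13 13 21,
    Load 10 13,
    Add 12 14 21,
    Mul 12 12 5,
    Sub 12 12 7,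
    Add 12 12 6,
    Sub 12 12 21,
    Div 14 12 6,
    Mul 12 6 14,
    Add 12 12 7,
    Mod 12 12 5,
    Jlt 12 7 77,
    Const 14 0,
    Jlt 20 10 79,
    Jmp 53,
    Sub 14 8 14,
    Jmp 53]"

lemma len_prog: "length prog = 81" by (simp add: prog_def)

lemma prog_step [simp]:
  "step prog (0, mm) = exec (Const 20 0) (0, mm)"
  "step prog (1, mm) = exec (Const 21 1) (1, mm)"
  "step prog (2, mm) = exec (Const 23 5) (2, mm)"
  "step prog (3, mm) = exec (Const 24 100) (3, mm)"
  "step prog (4, mm) = exec (Const 9 100) (4, mm)"
  "step prog (5, mm) = exec (Jlt 20 1 8) (5, mm)"
  "step prog (6, mm) = exec (Add 0 3 20) (6, mm)"
  "step prog (8, mm) = exec (Mul 12 1 3) (8, mm)"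
  "step prog (9, mm) = exec (Add 12 12 2) (9, mm)"
  "step prog (10, mm) = exec (Mod 7 12 0) (10, mm)"
  "step prog (11, mm) = exec (Sub 8 4 3) (11, mm)"
  "step prog (12, mm) = exec (Sub 13 0 21) (12, mm)"
  "step prog (13, mm) = exec (Jlt 8 13 15) (13, mm)"
  "step prog (14, mm) = exec (Mul 8 13 21) (14, mm)"
  "step prog (15, mm) = exec (Mul 5 0 21) (15, mm)"
  "step prog (16, mm) = exec (Mul 6 1 21) (16, mm)"
  "step prog (17, mm) = exec (Add 12 6 6) (17, mm)"
  "step prog (18, mm) = exec (Const 10 0) (18, mm)"
  "step prog (19, mm) = exec (Jlt 5 12 21) (19, mm)"
  "step prog (20, mm) = exec (Jmp 26) (20, mm)"
  "step prog (21, mm) = exec (Const 10 1) (21, mm)"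
  "step prog (22, mm) = exec (Mul 12 6 8) (22, mm)"
  "step prog (23, mm) = exec (Add 12 12 7) (23, mm)"
  "step prog (24, mm) = exec (Mod 7 12 5) (24, mm)"
  "step prog (25, mm) = exec (Sub 6 5 6) (25, mm)"
  "step prog (26, mm) = exec (Mul 12 6 8) (26, mm)"
  "step prog (27, mm) = exec (Add 12 12 7) (27, mm)"
  "step prog (28, mm) = exec (Div 11 12 5) (28, mm)"
  "step prog (29, mm) = exec (Jlt 20 11 35) (29, mm)"
  "step prog (30, mm) = exec (Const 14 0) (30, mm)"
  "step prog (31, mm) = exec (Jlt 20 10 33) (31, mm)"
  "step prog (32, mm) = exec (Jmp 53) (32, mm)"
  "step prog (33, mm) = exec (Mul 14 8 21) (33, mm)"
  "step prog (34, mm) = exec (Jmp 53) (34, mm)"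
  "step prog (35, mm) = exec (Store 9 5) (35, mm)"
  "step prog (36, mm) = exec (Add 13 9 21) (36, mm)"
  "step prog (37, mm) = exec (Store 13 6) (37, mm)"
  "step prog (38, mm) = exec (Add 13 13 21) (38, mm)"
  "step prog (39, mm) = exec (Store 13 7) (39, mm)"
  "step prog (40, mm) = exec (Add 13 13 21) (40, mm)"
  "step prog (41, mm) = exec (Store 13 8) (41, mm)"
  "step prog (42, mm) = exec (Add 13 13 21) (42, mm)"
  "step prog (43, mm) = exec (Store 13 10) (43, mm)"
  "step prog (44, mm) = exec (Add 9 9 23) (44, mm)"
  "step prog (45, mm) = exec (Sub 8 11 21) (45, mm)"
  "step prog (46, mm) = exec (Sub 12 7 5) (46, mm)"
  "step prog (47, mm) = exec (Mod 7 12 6) (47, mm)"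
  "step prog (48, mm) = exec (Sub 12 20 5) (48, mm)"
  "step prog (49, mm) = exec (Mod 12 12 6) (49, mm)"
  "step prog (50, mm) = exec (Mul 5 6 21) (50, mm)"
  "step prog (51, mm) = exec (Mul 6 12 21) (51, mm)"
  "step prog (52, mm) = exec (Jmp 17) (52, mm)"
  "step prog (53, mm) = exec (Jlt 24 9 56) (53, mm)"
  "step prog (54, mm) = exec (Add 0 14 3) (54, mm)"
  "step prog (56, mm) = exec (Sub 9 9 23) (56, mm)"
  "step prog (57, mm) = exec (Load 5 9) (57, mm)"
  "step prog (58, mm) = exec (Add 13 9 21) (58, mm)"
  "step prog (59, mm) = exec (Load 6 13) (59, mm)"
  "step prog (60, mm) = exec (Add 13 13 21) (60, mm)"
  "step prog (61, mm) = exec (Load 7 13) (61, mm)"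
  "step prog (62, mm) = exec (Add 13 13 21) (62, mm)"
  "step prog (63, mm) = exec (Load 8 13) (63, mm)"
  "step prog (64, mm) = exec (Add 13 13 21) (64, mm)"
  "step prog (65, mm) = exec (Load 10 13) (65, mm)"
  "step prog (66, mm) = exec (Add 12 14 21) (66, mm)"
  "step prog (67, mm) = exec (Mul 12 12 5) (67, mm)"
  "step prog (68, mm) = exec (Sub 12 12 7) (68, mm)"
  "step prog (69, mm) = exec (Add 12 12 6) (69, mm)"
  "step prog (70, mm) = exec (Sub 12 12 21) (70, mm)"
  "step prog (71, mm) = exec (Div 14 12 6) (71, mm)"
  "step prog (72, mm) = exec (Mul 12 6 14) (72, mm)"
  "step prog (73, mm) = exec (Add 12 12 7) (73, mm)"
  "step prog (74, mm) = exec (Mod 12 12 5) (74, mm)"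
  "step prog (75, mm) = exec (Jlt 12 7 77) (75, mm)"
  "step prog (76, mm) = exec (Const 14 0) (76, mm)"
  "step prog (77, mm) = exec (Jlt 20 10 79) (77, mm)"
  "step prog (78, mm) = exec (Jmp 53) (78, mm)"
  "step prog (79, mm) = exec (Sub 14 8 14) (79, mm)"
  "step prog (80, mm) = exec (Jmp 53) (80, mm)"
  by (simp_all add: step_def halted_def prog_def)

lemma prog_halt:
  "halted prog (7, mm)"
  "halted prog (55, mm)"
  by (simp_all add: halted_def prog_def)


definition backf :: "frame \<Rightarrow> int \<Rightarrow> int" where
  "backf fr j = (case fr of (fm, fA, fc, fN, fr) \<Rightarrow>
     (let y1 = ((j+1)*fm - fc + fA - 1) div fA;
          y2 = (if (fA * y1 + fc) mod fm < fc then y1 else 0)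
      in if 0 < fr then fN - y2 else y2))"

lemma addr_ne [simp]:
  "100 \<le> s \<Longrightarrow> r < 100 \<Longrightarrow> (s = r) \<longleftrightarrow> False"
  "100 \<le> s \<Longrightarrow> r < 100 \<Longrightarrow> (r = s) \<longleftrightarrow> False"
  "100 \<le> s \<Longrightarrow> 0 \<le> k \<Longrightarrow> r < 100 \<Longrightarrow> (s + k = r) \<longleftrightarrow> False"
  "100 \<le> s \<Longrightarrow> 0 \<le> k \<Longrightarrow> r < 100 \<Longrightarrow> (r = s + k) \<longleftrightarrow> False"
  "100 \<le> s \<Longrightarrow> 0 \<le> k \<Longrightarrow> r < 100 \<Longrightarrow> (k + s = r) \<longleftrightarrow> False"
  "100 \<le> s \<Longrightarrow> 0 \<le> k \<Longrightarrow> r < 100 \<Longrightarrow> (r = k + s) \<longleftrightarrow> False"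
  for s r k :: int by auto

lemma pop_block:
  assumes cm: "common i1 B (fs @ [(fm,fA,fc,fN,fr)]) mem"
    and sp: "mem 9 = 105 + 5 * int (length fs)"
    and y: "mem 14 = j"
    and r: "0 \<le> j" "j \<le> P" "1 \<le> fm" "fm \<le> P" "1 \<le> fA" "fA \<le> P" "0 \<le> fc" "fc \<le> P"
      "0 \<le> fN" "fN \<le> P"
      "0 \<le> ((j+1)*fm - fc + fA - 1) div fA" "((j+1)*fm - fc + fA - 1) div fA \<le> P"
    and hB: "(P+1)*(P+1) + 2*P \<le> B" "105 + 5*int(length fs) \<le> B"
  shows "reach prog B (53, mem) 30 (\<lambda>c'. fst c' = 53 \<and> common i1 B fs (snd c') \<and>
     snd c' 9 = 100 + 5 * int (length fs) \<and> snd c' 14 = backf (fm,fA,fc,fN,fr) j)"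
proof -
  define s where "s = 100 + 5 * int (length fs)"
  have c: "mem 20 = 0" "mem 21 = 1" "mem 23 = 5" "mem 24 = 100" "mem 3 = i1" "bnd B mem"
     and st: "stk (fs @ [(fm,fA,fc,fN,fr)]) mem"
    using cm unfolding common_def by auto
  note fr0 = stk_pop[OF st s_def]
  have fr1: "mem (1 + s) = fA" "mem (2 + s) = fc" "mem (3 + s) = fN" "mem (4 + s) = fr"
    using fr0 by (simp_all add: add.commute)
  note fr = fr0 fr1
  have sp': "mem 9 = s + 5" using sp s_def by simp
  have s100: "100 \<le> s" using s_def by simp
  have s95: "95 < s" using s100 by simp
  have P0: "0 \<le> P" using r by simp
  have j1: "(j+1)*fm \<le> (P+1)*P" using r by (intro mult_mono) auto
  have j2: "0 \<le> (j+1)*fm" using r by simp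
  define y1 where "y1 = ((j+1)*fm - fc + fA - 1) div fA"
  have y1b: "fA * y1 \<le> P * P" "0 \<le> fA * y1" using r unfolding y1_def[symmetric] by (auto intro: mult_mono)
  have md: "0 \<le> (fA * y1 + fc) mod fm" "(fA * y1 + fc) mod fm < fm" using r by auto
  have PP: "P \<le> P * P" using r by (simp add: mult_le_cancel_left1 P0) 
  have hB': "P*P + 4*P + 1 \<le> B" using hB(1) by (simp add: algebra_simps)
  have j1': "(j+1)*fm \<le> P*P + P" using j1 by (simp add: algebra_simps)
  have y1r: "0 \<le> y1" "y1 \<le> P" using r(11,12) unfolding y1_def .
  have mb: "\<bar>mem x\<bar> \<le> B" for x using c(6) unfolding bnd_def by blast
  have fb: "\<bar>fm\<bar> \<le> B" "\<bar>fA\<bar> \<le> B" "\<bar>fc\<bar> \<le> B" "\<bar>fN\<bar> \<le> B" "\<bar>fr\<bar> \<le> B"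
    using mb[of s] mb[of "s+1"] mb[of "s+2"] mb[of "s+3"] mb[of "s+4"] fr0 by auto
  have bb0: "\<bar>s\<bar> \<le> B" unfolding abs_le_iff using hB hB' s_def r j1' j2 y1b md PP y1r fb by (intro conjI; linarith)
  have bb1: "\<bar>1+s\<bar> \<le> B" unfolding abs_le_iff using hB hB' s_def r j1' j2 y1b md PP y1r fb by (intro conjI; linarith)
  have bb2: "\<bar>2+s\<bar> \<le> B" unfolding abs_le_iff using hB hB' s_def r j1' j2 y1b md PP y1r fb by (intro conjI; linarith)
  have bb3: "\<bar>3+s\<bar> \<le> B" unfolding abs_le_iff using hB hB' s_def r j1' j2 y1b md PP y1r fb by (intro conjI; linarith)
  have bb4: "\<bar>4+s\<bar> \<le> B" unfolding abs_le_iff using hB hB' s_def r j1' j2 y1b md PP y1r fb by (intro conjI; linarith)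
  have bb5: "\<bar>s+1\<bar> \<le> B" unfolding abs_le_iff using hB hB' s_def r j1' j2 y1b md PP y1r fb by (intro conjI; linarith)
  have bb6: "\<bar>fm\<bar> \<le> B" unfolding abs_le_iff using hB hB' s_def r j1' j2 y1b md PP y1r fb by (intro conjI; linarith)
  have bb7: "\<bar>fA\<bar> \<le> B" unfolding abs_le_iff using hB hB' s_def r j1' j2 y1b md PP y1r fb by (intro conjI; linarith)
  have bb8: "\<bar>fc\<bar> \<le> B" unfolding abs_le_iff using hB hB' s_def r j1' j2 y1b md PP y1r fb by (intro conjI; linarith)
  have bb9: "\<bar>fN\<bar> \<le> B" unfolding abs_le_iff using hB hB' s_def r j1' j2 y1b md PP y1r fb by (intro conjI; linarith)
  have bb10: "\<bar>fr\<bar> \<le> B" unfolding abs_le_iff using hB hB' s_def r j1' j2 y1b md PP y1r fb by (intro conjI; linarith)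
  have bb11: "\<bar>j+1\<bar> \<le> B" unfolding abs_le_iff using hB hB' s_def r j1' j2 y1b md PP y1r fb by (intro conjI; linarith)
  have bb12: "\<bar>(j+1)*fm\<bar> \<le> B" unfolding abs_le_iff using hB hB' s_def r j1' j2 y1b md PP y1r fb by (intro conjI; linarith)
  have bb13: "\<bar>(j+1)*fm - fc\<bar> \<le> B" unfolding abs_le_iff using hB hB' s_def r j1' j2 y1b md PP y1r fb by (intro conjI; linarith)
  have bb14: "\<bar>(j+1)*fm - fc + fA\<bar> \<le> B" unfolding abs_le_iff using hB hB' s_def r j1' j2 y1b md PP y1r fb by (intro conjI; linarith)
  have bb15: "\<bar>(j+1)*fm - fc + fA - 1\<bar> \<le> B" unfolding abs_le_iff using hB hB' s_def r j1' j2 y1b md PP y1r fb by (intro conjI; linarith)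
  have bb16: "\<bar>y1\<bar> \<le> B" unfolding abs_le_iff using hB hB' s_def r j1' j2 y1b md PP y1r fb by (intro conjI; linarith)
  have bb17: "\<bar>fA*y1\<bar> \<le> B" unfolding abs_le_iff using hB hB' s_def r j1' j2 y1b md PP y1r fb by (intro conjI; linarith)
  have bb18: "\<bar>fA*y1 + fc\<bar> \<le> B" unfolding abs_le_iff using hB hB' s_def r j1' j2 y1b md PP y1r fb by (intro conjI; linarith)
  have bb19: "\<bar>(fA*y1 + fc) mod fm\<bar> \<le> B" unfolding abs_le_iff using hB hB' s_def r j1' j2 y1b md PP y1r fb by (intro conjI; linarith)
  have bb20: "\<bar>fN - y1\<bar> \<le> B" unfolding abs_le_iff using hB hB' s_def r j1' j2 y1b md PP y1r fb by (intro conjI; linarith)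
  have bb21: "\<bar>fN\<bar> \<le> B" unfolding abs_le_iff using hB hB' s_def r j1' j2 y1b md PP y1r fb by (intro conjI; linarith)
  have bb22: "0 \<le> B" using hB hB' s_def r j1' j2 y1b md PP y1r fb by linarith
  note bb = bb0 bb1 bb2 bb3 bb4 bb5 bb6 bb7 bb8 bb9 bb10 bb11 bb12 bb13 bb14 bb15 bb16 bb17 bb18 bb19 bb20 bb21 bb22
  show ?thesis
    apply (rule reach_step, simp, simp add: c bb, simp add: c y sp' s100 s95 fr y1_def[symmetric] split del: if_split)
    apply (rule reach_step, simp, simp add: c bb, simp add: c y sp' s100 s95 fr y1_def[symmetric] split del: if_split)
    apply (rule reach_step, simp, simp add: c bb, simp add: c y sp' s100 s95 fr y1_def[symmetric] split del: if_split)
    apply (rule reach_step, simp, simp add: c bb, simp add: c y sp' s100 s95 fr y1_def[symmetric] split del: if_split)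
    apply (rule reach_step, simp, simp add: c bb, simp add: c y sp' s100 s95 fr y1_def[symmetric] split del: if_split)
    apply (rule reach_step, simp, simp add: c bb, simp add: c y sp' s100 s95 fr y1_def[symmetric] split del: if_split)
    apply (rule reach_step, simp, simp add: c bb, simp add: c y sp' s100 s95 fr y1_def[symmetric] split del: if_split)
    apply (rule reach_step, simp, simp add: c bb, simp add: c y sp' s100 s95 fr y1_def[symmetric] split del: if_split)
    apply (rule reach_step, simp, simp add: c bb, simp add: c y sp' s100 s95 fr y1_def[symmetric] split del: if_split)
    apply (rule reach_step, simp, simp add: c bb, simp add: c y sp' s100 s95 fr y1_def[symmetric] split del: if_split)
    apply (rule reach_step, simp, simp add: c bb, simp add: c y sp' s100 s95 fr y1_def[symmetric] split del: if_split)
    apply (rule reach_step, simp, simp add: c bb, simp add: c y sp' s100 s95 fr y1_def[symmetric] split del: if_split)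
    apply (rule reach_step, simp, simp add: c bb, simp add: c y sp' s100 s95 fr y1_def[symmetric] split del: if_split)
    apply (rule reach_step, simp, simp add: c bb, simp add: c y sp' s100 s95 fr y1_def[symmetric] split del: if_split)
    apply (rule reach_step, simp, simp add: c bb, simp add: c y sp' s100 s95 fr y1_def[symmetric] split del: if_split)
    apply (rule reach_step, simp, simp add: c bb, simp add: c y sp' s100 s95 fr y1_def[symmetric] split del: if_split)
    apply (rule reach_step, simp, simp add: c bb, simp add: c y sp' s100 s95 fr y1_def[symmetric] split del: if_split)
    apply (rule reach_step, simp, simp add: c bb, simp add: c y sp' s100 s95 fr y1_def[symmetric] split del: if_split)
    apply (rule reach_step, simp, simp add: c bb, simp add: c y sp' s100 s95 fr y1_def[symmetric] split del: if_split)
    apply (rule reach_step, simp, simp add: c bb, simp add: c y sp' s100 s95 fr y1_def[symmetric] split del: if_split)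
    apply (cases "(fA * y1 + fc) mod fm < fc"; cases "0 < fr")
    subgoal premises cs
      apply (rule reach_step, simp, simp add: c bb, simp add: c y sp' s100 s95 fr y1_def[symmetric] cs split del: if_split)
      apply (rule reach_step, simp, simp add: c bb, simp add: c y sp' s100 s95 fr y1_def[symmetric] cs split del: if_split)
      apply (rule reach_step, simp, simp add: c bb, simp add: c y sp' s100 s95 fr y1_def[symmetric] cs split del: if_split)
      apply (rule reach_step, simp, simp add: c bb, simp add: c y sp' s100 s95 fr y1_def[symmetric] cs split del: if_split)
      apply (rule reach_done)
       apply (simp add: c bb)
      apply (simp add: c bb common_def s_def[symmetric] backf_def Let_def y1_def[symmetric] cs)
      apply (rule stk_same[OF fr0(1)])
      apply simp
      done
    subgoal premises cs
      apply (rule reach_step, simp, simp add: c bb, simp add: c y sp' s100 s95 fr y1_def[symmetric] cs split del: if_split)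
      apply (rule reach_step, simp, simp add: c bb, simp add: c y sp' s100 s95 fr y1_def[symmetric] cs split del: if_split)
      apply (rule reach_step, simp, simp add: c bb, simp add: c y sp' s100 s95 fr y1_def[symmetric] cs split del: if_split)
      apply (rule reach_done)
       apply (simp add: c bb)
      apply (simp add: c bb common_def s_def[symmetric] backf_def Let_def y1_def[symmetric] cs)
      apply (rule stk_same[OF fr0(1)])
      apply simp
      done
    subgoal premises cs
      apply (rule reach_step, simp, simp add: c bb, simp add: c y sp' s100 s95 fr y1_def[symmetric] cs split del: if_split)
      apply (rule reach_step, simp, simp add: c bb, simp add: c y sp' s100 s95 fr y1_def[symmetric] cs split del: if_split)
      apply (rule reach_step, simp, simp add: c bb, simp add: c y sp' s100 s95 fr y1_def[symmetric] cs split del: if_split)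
      apply (rule reach_step, simp, simp add: c bb, simp add: c y sp' s100 s95 fr y1_def[symmetric] cs split del: if_split)
      apply (rule reach_step, simp, simp add: c bb, simp add: c y sp' s100 s95 fr y1_def[symmetric] cs split del: if_split)
      apply (rule reach_done)
       apply (simp add: c bb)
      apply (simp add: c bb common_def s_def[symmetric] backf_def Let_def y1_def[symmetric] cs)
      apply (rule stk_same[OF fr0(1)])
      apply simp
      done
    subgoal premises cs
      apply (rule reach_step, simp, simp add: c bb, simp add: c y sp' s100 s95 fr y1_def[symmetric] cs split del: if_split)
      apply (rule reach_step, simp, simp add: c bb, simp add: c y sp' s100 s95 fr y1_def[symmetric] cs split del: if_split)
      apply (rule reach_step, simp, simp add: c bb, simp add: c y sp' s100 s95 fr y1_def[symmetric] cs split del: if_split)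
      apply (rule reach_step, simp, simp add: c bb, simp add: c y sp' s100 s95 fr y1_def[symmetric] cs split del: if_split)
      apply (rule reach_done)
       apply (simp add: c bb)
      apply (simp add: c bb common_def s_def[symmetric] backf_def Let_def y1_def[symmetric] cs)
      apply (rule stk_same[OF fr0(1)])
      apply simp
      done
    done
qed

definition finv :: "int \<Rightarrow> int \<Rightarrow> frame list \<Rightarrow> int \<Rightarrow> int \<Rightarrow> int \<Rightarrow> int \<Rightarrow> (int \<Rightarrow> int) \<Rightarrow> bool" where
  "finv i1 B fs m A c N mem \<longleftrightarrow> common i1 B fs mem \<and> mem 5 = m \<and> mem 6 = A \<and> mem 7 = c \<and> mem 8 = N \<and>
     mem 9 = 100 + 5 * int (length fs)"

lemma push_block:
  assumes fi: "finv i1 B fs m A c N mem"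
    and r: "1 \<le> m" "m \<le> P" "0 \<le> A" "A < m" "0 \<le> c" "c < m" "0 \<le> N" "N \<le> P"
    and hB: "(P+1)*(P+1) + 2*P \<le> B" "110 + 5*int(length fs) \<le> B"
    and K0: "0 < ((if m < 2 * A then m - A else A) * N + (if m < 2 * A then (A*N + c) mod m else c)) div m"
  shows "reach prog B (17, mem) 30 (\<lambda>c'. fst c' = 17 \<and>
     finv i1 B (fs @ [(m, if m < 2 * A then m - A else A, if m < 2 * A then (A*N + c) mod m else c, N,
        if m < 2 * A then 1 else 0)]) (if m < 2 * A then m - A else A)
       ((-m) mod (if m < 2 * A then m - A else A))
       (((if m < 2 * A then (A*N + c) mod m else c) - m) mod (if m < 2 * A then m - A else A))
       (((if m < 2 * A then m - A else A) * N + (if m < 2 * A then (A*N + c) mod m else c)) div m - 1)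
       (snd c'))"
proof -
  define s where "s = 100 + 5 * int (length fs)"
  have c: "mem 20 = 0" "mem 21 = 1" "mem 23 = 5" "mem 24 = 100" "mem 3 = i1" "bnd B mem"
     "stk fs mem" "mem 5 = m" "mem 6 = A" "mem 7 = c" "mem 8 = N"
    using fi unfolding finv_def common_def by auto
  have sp': "mem 9 = s" using fi s_def unfolding finv_def by simp
  have s100: "100 \<le> s" using s_def by simp
  have P0: "0 \<le> P" using r by simp
  have PP: "P \<le> P * P" using r by (simp add: mult_le_cancel_left1 P0)
  have hB': "P*P + 4*P + 1 \<le> B" using hB(1) by (simp add: algebra_simps)
  have AN: "0 \<le> A*N" "A*N \<le> P*P" using r by (auto intro: mult_mono)
  have mb: "\<bar>mem x\<bar> \<le> B" for x using c(6) unfolding bnd_def by blast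
  show ?thesis
  proof (cases "m < 2 * A")
    case True
    define A1 where "A1 = m - A"
    define c1 where "c1 = (A*N + c) mod m"
    define K where "K = (A1 * N + c1) div m"
    have cs: "m < 2 * A" "(m < 2 * A) = True" using True by auto
    have K0: "0 < K" using K0 True unfolding K_def A1_def c1_def by simp
    have a1: "1 \<le> A1" "A1 \<le> m" using True r unfolding A1_def by auto
    have c1r: "0 \<le> c1" "c1 < m" using r unfolding c1_def by auto
    have A1N: "0 \<le> A1*N" "A1*N \<le> P*P" using r a1 by (auto intro: mult_mono)
    have Kb: "0 \<le> K" "K \<le> A1*N + c1"
    proof -
      have x0: "0 \<le> A1*N + c1" using A1N c1r by simp
      show "0 \<le> K" unfolding K_def using x0 r(1) by (simp add: pos_imp_zdiv_nonneg_iff)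
      have "(A1*N + c1) div m \<le> (A1*N + c1) div 1" by (rule zdiv_mono2) (use x0 r(1) in auto)
      then show "K \<le> A1*N + c1" unfolding K_def by simp
    qed
    have md: "0 \<le> (c1 - m) mod A1" "(c1 - m) mod A1 < A1" "0 \<le> (-m) mod A1" "(-m) mod A1 < A1" using a1 by auto
        have bt0: "0 \<le> B" using hB hB' s_def r PP AN A1N a1 c1r Kb md P0 c1_def by linarith
    have bt1: "\<bar>2 * A\<bar> \<le> B" unfolding abs_le_iff using hB hB' s_def r PP AN A1N a1 c1r Kb md P0 c1_def by (intro conjI; linarith)
    have bt2: "\<bar>1::int\<bar> \<le> B" unfolding abs_le_iff using hB hB' s_def r PP AN A1N a1 c1r Kb md P0 c1_def by (intro conjI; linarith)
    have bt3: "\<bar>A1 * N\<bar> \<le> B" unfolding abs_le_iff using hB hB' s_def r PP AN A1N a1 c1r Kb md P0 c1_def by (intro conjI; linarith)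
    have bt4: "\<bar>A1 * N + c1\<bar> \<le> B" unfolding abs_le_iff using hB hB' s_def r PP AN A1N a1 c1r Kb md P0 c1_def by (intro conjI; linarith)
    have bt5: "\<bar>K\<bar> \<le> B" unfolding abs_le_iff using hB hB' s_def r PP AN A1N a1 c1r Kb md P0 c1_def by (intro conjI; linarith)
    have bt6: "\<bar>s\<bar> \<le> B" unfolding abs_le_iff using hB hB' s_def r PP AN A1N a1 c1r Kb md P0 c1_def by (intro conjI; linarith)
    have bt7: "\<bar>1+s\<bar> \<le> B" unfolding abs_le_iff using hB hB' s_def r PP AN A1N a1 c1r Kb md P0 c1_def by (intro conjI; linarith)
    have bt8: "\<bar>2+s\<bar> \<le> B" unfolding abs_le_iff using hB hB' s_def r PP AN A1N a1 c1r Kb md P0 c1_def by (intro conjI; linarith)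
    have bt9: "\<bar>3+s\<bar> \<le> B" unfolding abs_le_iff using hB hB' s_def r PP AN A1N a1 c1r Kb md P0 c1_def by (intro conjI; linarith)
    have bt10: "\<bar>4+s\<bar> \<le> B" unfolding abs_le_iff using hB hB' s_def r PP AN A1N a1 c1r Kb md P0 c1_def by (intro conjI; linarith)
    have bt11: "\<bar>5+s\<bar> \<le> B" unfolding abs_le_iff using hB hB' s_def r PP AN A1N a1 c1r Kb md P0 c1_def by (intro conjI; linarith)
    have bt12: "\<bar>s+5\<bar> \<le> B" unfolding abs_le_iff using hB hB' s_def r PP AN A1N a1 c1r Kb md P0 c1_def by (intro conjI; linarith)
    have bt13: "\<bar>m\<bar> \<le> B" unfolding abs_le_iff using hB hB' s_def r PP AN A1N a1 c1r Kb md P0 c1_def by (intro conjI; linarith)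
    have bt14: "\<bar>A1\<bar> \<le> B" unfolding abs_le_iff using hB hB' s_def r PP AN A1N a1 c1r Kb md P0 c1_def by (intro conjI; linarith)
    have bt15: "\<bar>c1\<bar> \<le> B" unfolding abs_le_iff using hB hB' s_def r PP AN A1N a1 c1r Kb md P0 c1_def by (intro conjI; linarith)
    have bt16: "\<bar>N\<bar> \<le> B" unfolding abs_le_iff using hB hB' s_def r PP AN A1N a1 c1r Kb md P0 c1_def by (intro conjI; linarith)
    have bt17: "\<bar>K - 1\<bar> \<le> B" unfolding abs_le_iff using hB hB' s_def r PP AN A1N a1 c1r Kb md P0 c1_def by (intro conjI; linarith)
    have bt18: "\<bar>c1 - m\<bar> \<le> B" unfolding abs_le_iff using hB hB' s_def r PP AN A1N a1 c1r Kb md P0 c1_def by (intro conjI; linarith)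
    have bt19: "\<bar>(c1 - m) mod A1\<bar> \<le> B" unfolding abs_le_iff using hB hB' s_def r PP AN A1N a1 c1r Kb md P0 c1_def by (intro conjI; linarith)
    have bt20: "\<bar>- m\<bar> \<le> B" unfolding abs_le_iff using hB hB' s_def r PP AN A1N a1 c1r Kb md P0 c1_def by (intro conjI; linarith)
    have bt21: "\<bar>(- m) mod A1\<bar> \<le> B" unfolding abs_le_iff using hB hB' s_def r PP AN A1N a1 c1r Kb md P0 c1_def by (intro conjI; linarith)
    have bt22: "\<bar>A * N\<bar> \<le> B" unfolding abs_le_iff using hB hB' s_def r PP AN A1N a1 c1r Kb md P0 c1_def by (intro conjI; linarith)
    have bt23: "\<bar>A * N + c\<bar> \<le> B" unfolding abs_le_iff using hB hB' s_def r PP AN A1N a1 c1r Kb md P0 c1_def by (intro conjI; linarith)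
    have bt24: "\<bar>(A * N + c) mod m\<bar> \<le> B" unfolding abs_le_iff using hB hB' s_def r PP AN A1N a1 c1r Kb md P0 c1_def by (intro conjI; linarith)
    have bt25: "\<bar>m - A\<bar> \<le> B" unfolding abs_le_iff using hB hB' s_def r PP AN A1N a1 c1r Kb md P0 c1_def by (intro conjI; linarith)
    have btx: "1 \<le> B" using hB hB' P0 PP by linarith
    have bty1: "\<bar>s + 1\<bar> \<le> B" unfolding abs_le_iff using hB s_def by (intro conjI; linarith)
    have bty2: "\<bar>s + 2\<bar> \<le> B" unfolding abs_le_iff using hB s_def by (intro conjI; linarith)
    have bty3: "\<bar>s + 3\<bar> \<le> B" unfolding abs_le_iff using hB s_def by (intro conjI; linarith)
    have bty4: "\<bar>s + 4\<bar> \<le> B" unfolding abs_le_iff using hB s_def by (intro conjI; linarith)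
    have bty5: "\<bar>s + 5\<bar> \<le> B" unfolding abs_le_iff using hB s_def by (intro conjI; linarith)
    note bb = btx bty1 bty2 bty3 bty4 bty5 bt0 bt1 bt2 bt3 bt4 bt5 bt6 bt7 bt8 bt9 bt10 bt11 bt12 bt13 bt14 bt15 bt16 bt17 bt18 bt19 bt20 bt21 bt22 bt23 bt24 bt25
    show ?thesis
    apply (rule reach_step)
    apply simp
    apply (simp add: c bb)
    apply (simp add: c sp' s100 A1_def[symmetric] c1_def[symmetric] K_def[symmetric] cs K0 split del: if_split)
    apply (rule reach_step)
    apply simp
    apply (simp add: c bb)
    apply (simp add: c sp' s100 A1_def[symmetric] c1_def[symmetric] K_def[symmetric] cs K0 split del: if_split)
    apply (rule reach_step)
    apply simp
    apply (simp add: c bb)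
    apply (simp add: c sp' s100 A1_def[symmetric] c1_def[symmetric] K_def[symmetric] cs K0 split del: if_split)
    apply (rule reach_step)
    apply simp
    apply (simp add: c bb)
    apply (simp add: c sp' s100 A1_def[symmetric] c1_def[symmetric] K_def[symmetric] cs K0 split del: if_split)
    apply (rule reach_step)
    apply simp
    apply (simp add: c bb)
    apply (simp add: c sp' s100 A1_def[symmetric] c1_def[symmetric] K_def[symmetric] cs K0 split del: if_split)
    apply (rule reach_step)
    apply simp
    apply (simp add: c bb)
    apply (simp add: c sp' s100 A1_def[symmetric] c1_def[symmetric] K_def[symmetric] cs K0 split del: if_split)
    apply (rule reach_step)
    apply simp
    apply (simp add: c bb)
    apply (simp add: c sp' s100 A1_def[symmetric] c1_def[symmetric] K_def[symmetric] cs K0 split del: if_split)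
    apply (rule reach_step)
    apply simp
    apply (simp add: c bb)
    apply (simp add: c sp' s100 A1_def[symmetric] c1_def[symmetric] K_def[symmetric] cs K0 split del: if_split)
    apply (rule reach_step)
    apply simp
    apply (simp add: c bb)
    apply (simp add: c sp' s100 A1_def[symmetric] c1_def[symmetric] K_def[symmetric] cs K0 split del: if_split)
    apply (rule reach_step)
    apply simp
    apply (simp add: c bb)
    apply (simp add: c sp' s100 A1_def[symmetric] c1_def[symmetric] K_def[symmetric] cs K0 split del: if_split)
    apply (rule reach_step)
    apply simp
    apply (simp add: c bb)
    apply (simp add: c sp' s100 A1_def[symmetric] c1_def[symmetric] K_def[symmetric] cs K0 split del: if_split)
    apply (rule reach_step)
    apply simp
    apply (simp add: c bb)
    apply (simp add: c sp' s100 A1_def[symmetric] c1_def[symmetric] K_def[symmetric] cs K0 split del: if_split)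
    apply (rule reach_step)
    apply simp
    apply (simp add: c bb)
    apply (simp add: c sp' s100 A1_def[symmetric] c1_def[symmetric] K_def[symmetric] cs K0 split del: if_split)
    apply (rule reach_step)
    apply simp
    apply (simp add: c bb)
    apply (simp add: c sp' s100 A1_def[symmetric] c1_def[symmetric] K_def[symmetric] cs K0 split del: if_split)
    apply (rule reach_step)
    apply simp
    apply (simp add: c bb)
    apply (simp add: c sp' s100 A1_def[symmetric] c1_def[symmetric] K_def[symmetric] cs K0 split del: if_split)
    apply (rule reach_step)
    apply simp
    apply (simp add: c bb)
    apply (simp add: c sp' s100 A1_def[symmetric] c1_def[symmetric] K_def[symmetric] cs K0 split del: if_split)
    apply (rule reach_step)
    apply simp
    apply (simp add: c bb)
    apply (simp add: c sp' s100 A1_def[symmetric] c1_def[symmetric] K_def[symmetric] cs K0 split del: if_split)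
    apply (rule reach_step)
    apply simp
    apply (simp add: c bb)
    apply (simp add: c sp' s100 A1_def[symmetric] c1_def[symmetric] K_def[symmetric] cs K0 split del: if_split)
    apply (rule reach_step)
    apply simp
    apply (simp add: c bb)
    apply (simp add: c sp' s100 A1_def[symmetric] c1_def[symmetric] K_def[symmetric] cs K0 split del: if_split)
    apply (rule reach_step)
    apply simp
    apply (simp add: c bb)
    apply (simp add: c sp' s100 A1_def[symmetric] c1_def[symmetric] K_def[symmetric] cs K0 split del: if_split)
    apply (rule reach_step)
    apply simp
    apply (simp add: c bb)
    apply (simp add: c sp' s100 A1_def[symmetric] c1_def[symmetric] K_def[symmetric] cs K0 split del: if_split)
    apply (rule reach_step)
    apply simp
    apply (simp add: c bb)
    apply (simp add: c sp' s100 A1_def[symmetric] c1_def[symmetric] K_def[symmetric] cs K0 split del: if_split)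
    apply (rule reach_step)
    apply simp
    apply (simp add: c bb)
    apply (simp add: c sp' s100 A1_def[symmetric] c1_def[symmetric] K_def[symmetric] cs K0 split del: if_split)
    apply (rule reach_step)
    apply simp
    apply (simp add: c bb)
    apply (simp add: c sp' s100 A1_def[symmetric] c1_def[symmetric] K_def[symmetric] cs K0 split del: if_split)
    apply (rule reach_step)
    apply simp
    apply (simp add: c bb)
    apply (simp add: c sp' s100 A1_def[symmetric] c1_def[symmetric] K_def[symmetric] cs K0 split del: if_split)
    apply (rule reach_step)
    apply simp
    apply (simp add: c bb)
    apply (simp add: c sp' s100 A1_def[symmetric] c1_def[symmetric] K_def[symmetric] cs K0 split del: if_split)
    apply (rule reach_step)
    apply simp
    apply (simp add: c bb)
    apply (simp add: c sp' s100 A1_def[symmetric] c1_def[symmetric] K_def[symmetric] cs K0 split del: if_split)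
    apply (rule reach_step)
    apply simp
    apply (simp add: c bb)
    apply (simp add: c sp' s100 A1_def[symmetric] c1_def[symmetric] K_def[symmetric] cs K0 split del: if_split)
    apply (rule reach_step)
    apply simp
    apply (simp add: c bb)
    apply (simp add: c sp' s100 A1_def[symmetric] c1_def[symmetric] K_def[symmetric] cs K0 split del: if_split)
    apply (rule reach_step)
    apply simp
    apply (simp add: c bb)
    apply (simp add: c sp' s100 A1_def[symmetric] c1_def[symmetric] K_def[symmetric] cs K0 split del: if_split)
    apply (rule reach_done)
     apply (simp add: c bb)
    apply (simp add: c sp' s100 A1_def[symmetric] c1_def[symmetric] K_def[symmetric] cs K0 finv_def common_def bb s_def[symmetric] split del: if_split)
    apply (rule conjI)
    prefer 2 apply (simp add: c bb)
    apply (rule stk_push[OF c(7) s_def])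
         apply (auto simp: s100)[1]
        apply (simp add: s100)
       apply (simp add: s100)
      apply (simp add: s100)
     apply (simp add: s100)
    apply (simp add: s100)
    done
  next
    case False
    define K where "K = (A * N + c) div m"
    have cs: "\<not> m < 2 * A" "(m < 2 * A) = False" using False by auto
    have K0: "0 < K" using K0 False unfolding K_def by simp
    have a1: "1 \<le> A" "A \<le> m"
    proof -
      have "A \<noteq> 0"
      proof
        assume "A = 0"
        then have "K = c div m" unfolding K_def by simp
        also have "\<dots> = 0" using r by (simp add: div_pos_pos_trivial)
        finally show False using K0 by simp
      qed
      then show "1 \<le> A" "A \<le> m" using r by auto
    qed
    have c1r: "0 \<le> c" "c < m" using r by auto
    have A1N: "0 \<le> A*N" "A*N \<le> P*P" using r a1 by (auto intro: mult_mono)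
    have Kb: "0 \<le> K" "K \<le> A*N + c"
    proof -
      have x0: "0 \<le> A*N + c" using A1N c1r by simp
      show "0 \<le> K" unfolding K_def using x0 r(1) by (simp add: pos_imp_zdiv_nonneg_iff)
      have "(A*N + c) div m \<le> (A*N + c) div 1" by (rule zdiv_mono2) (use x0 r(1) in auto)
      then show "K \<le> A*N + c" unfolding K_def by simp
    qed
    have md: "0 \<le> (c - m) mod A" "(c - m) mod A < A" "0 \<le> (-m) mod A" "(-m) mod A < A" using a1 by auto
        have bf0: "0 \<le> B" using hB hB' s_def r PP AN A1N a1 c1r Kb md P0 by linarith
    have bf1: "\<bar>2 * A\<bar> \<le> B" unfolding abs_le_iff using hB hB' s_def r PP AN A1N a1 c1r Kb md P0 by (intro conjI; linarith)
    have bf2: "\<bar>1::int\<bar> \<le> B" unfolding abs_le_iff using hB hB' s_def r PP AN A1N a1 c1r Kb md P0 by (intro conjI; linarith)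
    have bf3: "\<bar>A * N\<bar> \<le> B" unfolding abs_le_iff using hB hB' s_def r PP AN A1N a1 c1r Kb md P0 by (intro conjI; linarith)
    have bf4: "\<bar>A * N + c\<bar> \<le> B" unfolding abs_le_iff using hB hB' s_def r PP AN A1N a1 c1r Kb md P0 by (intro conjI; linarith)
    have bf5: "\<bar>K\<bar> \<le> B" unfolding abs_le_iff using hB hB' s_def r PP AN A1N a1 c1r Kb md P0 by (intro conjI; linarith)
    have bf6: "\<bar>s\<bar> \<le> B" unfolding abs_le_iff using hB hB' s_def r PP AN A1N a1 c1r Kb md P0 by (intro conjI; linarith)
    have bf7: "\<bar>1+s\<bar> \<le> B" unfolding abs_le_iff using hB hB' s_def r PP AN A1N a1 c1r Kb md P0 by (intro conjI; linarith)
    have bf8: "\<bar>2+s\<bar> \<le> B" unfolding abs_le_iff using hB hB' s_def r PP AN A1N a1 c1r Kb md P0 by (intro conjI; linarith)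
    have bf9: "\<bar>3+s\<bar> \<le> B" unfolding abs_le_iff using hB hB' s_def r PP AN A1N a1 c1r Kb md P0 by (intro conjI; linarith)
    have bf10: "\<bar>4+s\<bar> \<le> B" unfolding abs_le_iff using hB hB' s_def r PP AN A1N a1 c1r Kb md P0 by (intro conjI; linarith)
    have bf11: "\<bar>5+s\<bar> \<le> B" unfolding abs_le_iff using hB hB' s_def r PP AN A1N a1 c1r Kb md P0 by (intro conjI; linarith)
    have bf12: "\<bar>s+5\<bar> \<le> B" unfolding abs_le_iff using hB hB' s_def r PP AN A1N a1 c1r Kb md P0 by (intro conjI; linarith)
    have bf13: "\<bar>m\<bar> \<le> B" unfolding abs_le_iff using hB hB' s_def r PP AN A1N a1 c1r Kb md P0 by (intro conjI; linarith)
    have bf14: "\<bar>A\<bar> \<le> B" unfolding abs_le_iff using hB hB' s_def r PP AN A1N a1 c1r Kb md P0 by (intro conjI; linarith)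
    have bf15: "\<bar>c\<bar> \<le> B" unfolding abs_le_iff using hB hB' s_def r PP AN A1N a1 c1r Kb md P0 by (intro conjI; linarith)
    have bf16: "\<bar>N\<bar> \<le> B" unfolding abs_le_iff using hB hB' s_def r PP AN A1N a1 c1r Kb md P0 by (intro conjI; linarith)
    have bf17: "\<bar>K - 1\<bar> \<le> B" unfolding abs_le_iff using hB hB' s_def r PP AN A1N a1 c1r Kb md P0 by (intro conjI; linarith)
    have bf18: "\<bar>c - m\<bar> \<le> B" unfolding abs_le_iff using hB hB' s_def r PP AN A1N a1 c1r Kb md P0 by (intro conjI; linarith)
    have bf19: "\<bar>(c - m) mod A\<bar> \<le> B" unfolding abs_le_iff using hB hB' s_def r PP AN A1N a1 c1r Kb md P0 by (intro conjI; linarith)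
    have bf20: "\<bar>- m\<bar> \<le> B" unfolding abs_le_iff using hB hB' s_def r PP AN A1N a1 c1r Kb md P0 by (intro conjI; linarith)
    have bf21: "\<bar>(- m) mod A\<bar> \<le> B" unfolding abs_le_iff using hB hB' s_def r PP AN A1N a1 c1r Kb md P0 by (intro conjI; linarith)
    have bfx: "1 \<le> B" using hB hB' P0 PP by linarith
    have bfy1: "\<bar>s + 1\<bar> \<le> B" unfolding abs_le_iff using hB s_def by (intro conjI; linarith)
    have bfy2: "\<bar>s + 2\<bar> \<le> B" unfolding abs_le_iff using hB s_def by (intro conjI; linarith)
    have bfy3: "\<bar>s + 3\<bar> \<le> B" unfolding abs_le_iff using hB s_def by (intro conjI; linarith)
    have bfy4: "\<bar>s + 4\<bar> \<le> B" unfolding abs_le_iff using hB s_def by (intro conjI; linarith)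
    have bfy5: "\<bar>s + 5\<bar> \<le> B" unfolding abs_le_iff using hB s_def by (intro conjI; linarith)
    note bb = bfx bfy1 bfy2 bfy3 bfy4 bfy5 bf0 bf1 bf2 bf3 bf4 bf5 bf6 bf7 bf8 bf9 bf10 bf11 bf12 bf13 bf14 bf15 bf16 bf17 bf18 bf19 bf20 bf21
    show ?thesis
    apply (rule reach_step)
    apply simp
    apply (simp add: c bb)
    apply (simp add: c sp' s100 K_def[symmetric] cs K0 split del: if_split)
    apply (rule reach_step)
    apply simp
    apply (simp add: c bb)
    apply (simp add: c sp' s100 K_def[symmetric] cs K0 split del: if_split)
    apply (rule reach_step)
    apply simp
    apply (simp add: c bb)
    apply (simp add: c sp' s100 K_def[symmetric] cs K0 split del: if_split)
    apply (rule reach_step)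
    apply simp
    apply (simp add: c bb)
    apply (simp add: c sp' s100 K_def[symmetric] cs K0 split del: if_split)
    apply (rule reach_step)
    apply simp
    apply (simp add: c bb)
    apply (simp add: c sp' s100 K_def[symmetric] cs K0 split del: if_split)
    apply (rule reach_step)
    apply simp
    apply (simp add: c bb)
    apply (simp add: c sp' s100 K_def[symmetric] cs K0 split del: if_split)
    apply (rule reach_step)
    apply simp
    apply (simp add: c bb)
    apply (simp add: c sp' s100 K_def[symmetric] cs K0 split del: if_split)
    apply (rule reach_step)
    apply simp
    apply (simp add: c bb)
    apply (simp add: c sp' s100 K_def[symmetric] cs K0 split del: if_split)
    apply (rule reach_step)
    apply simp
    apply (simp add: c bb)
    apply (simp add: c sp' s100 K_def[symmetric] cs K0 split del: if_split)
    apply (rule reach_step)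
    apply simp
    apply (simp add: c bb)
    apply (simp add: c sp' s100 K_def[symmetric] cs K0 split del: if_split)
    apply (rule reach_step)
    apply simp
    apply (simp add: c bb)
    apply (simp add: c sp' s100 K_def[symmetric] cs K0 split del: if_split)
    apply (rule reach_step)
    apply simp
    apply (simp add: c bb)
    apply (simp add: c sp' s100 K_def[symmetric] cs K0 split del: if_split)
    apply (rule reach_step)
    apply simp
    apply (simp add: c bb)
    apply (simp add: c sp' s100 K_def[symmetric] cs K0 split del: if_split)
    apply (rule reach_step)
    apply simp
    apply (simp add: c bb)
    apply (simp add: c sp' s100 K_def[symmetric] cs K0 split del: if_split)
    apply (rule reach_step)
    apply simp
    apply (simp add: c bb)
    apply (simp add: c sp' s100 K_def[symmetric] cs K0 split del: if_split)
    apply (rule reach_step)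
    apply simp
    apply (simp add: c bb)
    apply (simp add: c sp' s100 K_def[symmetric] cs K0 split del: if_split)
    apply (rule reach_step)
    apply simp
    apply (simp add: c bb)
    apply (simp add: c sp' s100 K_def[symmetric] cs K0 split del: if_split)
    apply (rule reach_step)
    apply simp
    apply (simp add: c bb)
    apply (simp add: c sp' s100 K_def[symmetric] cs K0 split del: if_split)
    apply (rule reach_step)
    apply simp
    apply (simp add: c bb)
    apply (simp add: c sp' s100 K_def[symmetric] cs K0 split del: if_split)
    apply (rule reach_step)
    apply simp
    apply (simp add: c bb)
    apply (simp add: c sp' s100 K_def[symmetric] cs K0 split del: if_split)
    apply (rule reach_step)
    apply simp
    apply (simp add: c bb)
    apply (simp add: c sp' s100 K_def[symmetric] cs K0 split del: if_split)
    apply (rule reach_step)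
    apply simp
    apply (simp add: c bb)
    apply (simp add: c sp' s100 K_def[symmetric] cs K0 split del: if_split)
    apply (rule reach_step)
    apply simp
    apply (simp add: c bb)
    apply (simp add: c sp' s100 K_def[symmetric] cs K0 split del: if_split)
    apply (rule reach_step)
    apply simp
    apply (simp add: c bb)
    apply (simp add: c sp' s100 K_def[symmetric] cs K0 split del: if_split)
    apply (rule reach_step)
    apply simp
    apply (simp add: c bb)
    apply (simp add: c sp' s100 K_def[symmetric] cs K0 split del: if_split)
    apply (rule reach_step)
    apply simp
    apply (simp add: c bb)
    apply (simp add: c sp' s100 K_def[symmetric] cs K0 split del: if_split)
    apply (rule reach_done)
     apply (simp add: c bb)
    apply (simp add: c sp' s100 K_def[symmetric] cs K0 finv_def common_def bb s_def[symmetric] split del: if_split)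
    apply (rule conjI)
    prefer 2 apply (simp add: c bb)
    apply (rule stk_push[OF c(7) s_def])
         apply (auto simp: s100)[1]
        apply (simp add: s100)
       apply (simp add: s100)
      apply (simp add: s100)
     apply (simp add: s100)
    apply (simp add: s100)
    done
  qed
qed

lemma term_block:
  assumes fi: "finv i1 B fs m A c N mem"
    and r: "1 \<le> m" "m \<le> P" "0 \<le> A" "A < m" "0 \<le> c" "c < m" "0 \<le> N" "N \<le> P"
    and hB: "(P+1)*(P+1) + 2*P \<le> B" "110 + 5*int(length fs) \<le> B"
    and K0: "0 = ((if m < 2 * A then m - A else A) * N + (if m < 2 * A then (A*N + c) mod m else c)) div m"
  shows "reach prog B (17, mem) 20 (\<lambda>c'. fst c' = 53 \<and> common i1 B fs (snd c') \<and>
     snd c' 9 = 100 + 5 * int (length fs) \<and> snd c' 14 = (if m < 2 * A then N else 0))"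
proof -
  define s where "s = 100 + 5 * int (length fs)"
  have c: "mem 20 = 0" "mem 21 = 1" "mem 23 = 5" "mem 24 = 100" "mem 3 = i1" "bnd B mem"
     "stk fs mem" "mem 5 = m" "mem 6 = A" "mem 7 = c" "mem 8 = N"
    using fi unfolding finv_def common_def by auto
  have sp': "mem 9 = s" using fi s_def unfolding finv_def by simp
  have s100: "100 \<le> s" using s_def by simp
  have P0: "0 \<le> P" using r by simp
  have PP: "P \<le> P * P" using r by (simp add: mult_le_cancel_left1 P0)
  have hB': "P*P + 4*P + 1 \<le> B" using hB(1) by (simp add: algebra_simps)
  have AN: "0 \<le> A*N" "A*N \<le> P*P" using r by (auto intro: mult_mono)
  have mb: "\<bar>mem x\<bar> \<le> B" for x using c(6) unfolding bnd_def by blast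
  show ?thesis
  proof (cases "m < 2 * A")
    case True
    define A1 where "A1 = m - A"
    define c1 where "c1 = (A*N + c) mod m"
    define K where "K = (A1 * N + c1) div m"
    have cs: "m < 2 * A" "(m < 2 * A) = True" using True by auto
    have K0: "K = 0" using K0 True unfolding K_def A1_def c1_def by simp
    have a1: "1 \<le> A1" "A1 \<le> m" using True r unfolding A1_def by auto
    have c1r: "0 \<le> c1" "c1 < m" using r unfolding c1_def by auto
    have A1N: "0 \<le> A1*N" "A1*N \<le> P*P" using r a1 by (auto intro: mult_mono)
    have Kb: "0 \<le> K" "K \<le> A1*N + c1"
    proof -
      have x0: "0 \<le> A1*N + c1" using A1N c1r by simp
      show "0 \<le> K" unfolding K_def using x0 r(1) by (simp add: pos_imp_zdiv_nonneg_iff)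
      have "(A1*N + c1) div m \<le> (A1*N + c1) div 1" by (rule zdiv_mono2) (use x0 r(1) in auto)
      then show "K \<le> A1*N + c1" unfolding K_def by simp
    qed
    have md: "0 \<le> (c1 - m) mod A1" "(c1 - m) mod A1 < A1" "0 \<le> (-m) mod A1" "(-m) mod A1 < A1" using a1 by auto
        have bt0: "0 \<le> B" using hB hB' s_def r PP AN A1N a1 c1r Kb P0 c1_def by linarith
    have bt1: "\<bar>2 * A\<bar> \<le> B" unfolding abs_le_iff using hB hB' s_def r PP AN A1N a1 c1r Kb P0 c1_def by (intro conjI; linarith)
    have bt2: "\<bar>1::int\<bar> \<le> B" unfolding abs_le_iff using hB hB' s_def r PP AN A1N a1 c1r Kb P0 c1_def by (intro conjI; linarith)
    have bt3: "\<bar>A1 * N\<bar> \<le> B" unfolding abs_le_iff using hB hB' s_def r PP AN A1N a1 c1r Kb P0 c1_def by (intro conjI; linarith)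
    have bt4: "\<bar>A1 * N + c1\<bar> \<le> B" unfolding abs_le_iff using hB hB' s_def r PP AN A1N a1 c1r Kb P0 c1_def by (intro conjI; linarith)
    have bt5: "\<bar>K\<bar> \<le> B" unfolding abs_le_iff using hB hB' s_def r PP AN A1N a1 c1r Kb P0 c1_def by (intro conjI; linarith)
    have bt6: "\<bar>s\<bar> \<le> B" unfolding abs_le_iff using hB hB' s_def r PP AN A1N a1 c1r Kb P0 c1_def by (intro conjI; linarith)
    have bt7: "\<bar>1+s\<bar> \<le> B" unfolding abs_le_iff using hB hB' s_def r PP AN A1N a1 c1r Kb P0 c1_def by (intro conjI; linarith)
    have bt8: "\<bar>2+s\<bar> \<le> B" unfolding abs_le_iff using hB hB' s_def r PP AN A1N a1 c1r Kb P0 c1_def by (intro conjI; linarith)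
    have bt9: "\<bar>3+s\<bar> \<le> B" unfolding abs_le_iff using hB hB' s_def r PP AN A1N a1 c1r Kb P0 c1_def by (intro conjI; linarith)
    have bt10: "\<bar>4+s\<bar> \<le> B" unfolding abs_le_iff using hB hB' s_def r PP AN A1N a1 c1r Kb P0 c1_def by (intro conjI; linarith)
    have bt11: "\<bar>5+s\<bar> \<le> B" unfolding abs_le_iff using hB hB' s_def r PP AN A1N a1 c1r Kb P0 c1_def by (intro conjI; linarith)
    have bt12: "\<bar>s+5\<bar> \<le> B" unfolding abs_le_iff using hB hB' s_def r PP AN A1N a1 c1r Kb P0 c1_def by (intro conjI; linarith)
    have bt13: "\<bar>m\<bar> \<le> B" unfolding abs_le_iff using hB hB' s_def r PP AN A1N a1 c1r Kb P0 c1_def by (intro conjI; linarith)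
    have bt14: "\<bar>A1\<bar> \<le> B" unfolding abs_le_iff using hB hB' s_def r PP AN A1N a1 c1r Kb P0 c1_def by (intro conjI; linarith)
    have bt15: "\<bar>c1\<bar> \<le> B" unfolding abs_le_iff using hB hB' s_def r PP AN A1N a1 c1r Kb P0 c1_def by (intro conjI; linarith)
    have bt16: "\<bar>N\<bar> \<le> B" unfolding abs_le_iff using hB hB' s_def r PP AN A1N a1 c1r Kb P0 c1_def by (intro conjI; linarith)
    have bt17: "\<bar>K - 1\<bar> \<le> B" unfolding abs_le_iff using hB hB' s_def r PP AN A1N a1 c1r Kb P0 c1_def by (intro conjI; linarith)
    have bt18: "\<bar>c1 - m\<bar> \<le> B" unfolding abs_le_iff using hB hB' s_def r PP AN A1N a1 c1r Kb P0 c1_def by (intro conjI; linarith)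
    have bt20: "\<bar>- m\<bar> \<le> B" unfolding abs_le_iff using hB hB' s_def r PP AN A1N a1 c1r Kb P0 c1_def by (intro conjI; linarith)
    have bt22: "\<bar>A * N\<bar> \<le> B" unfolding abs_le_iff using hB hB' s_def r PP AN A1N a1 c1r Kb P0 c1_def by (intro conjI; linarith)
    have bt23: "\<bar>A * N + c\<bar> \<le> B" unfolding abs_le_iff using hB hB' s_def r PP AN A1N a1 c1r Kb P0 c1_def by (intro conjI; linarith)
    have bt24: "\<bar>(A * N + c) mod m\<bar> \<le> B" unfolding abs_le_iff using hB hB' s_def r PP AN A1N a1 c1r Kb P0 c1_def by (intro conjI; linarith)
    have bt25: "\<bar>m - A\<bar> \<le> B" unfolding abs_le_iff using hB hB' s_def r PP AN A1N a1 c1r Kb P0 c1_def by (intro conjI; linarith)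
    have btx: "1 \<le> B" using hB hB' P0 PP by linarith
    have bty1: "\<bar>s + 1\<bar> \<le> B" unfolding abs_le_iff using hB s_def by (intro conjI; linarith)
    have bty2: "\<bar>s + 2\<bar> \<le> B" unfolding abs_le_iff using hB s_def by (intro conjI; linarith)
    have bty3: "\<bar>s + 3\<bar> \<le> B" unfolding abs_le_iff using hB s_def by (intro conjI; linarith)
    have bty4: "\<bar>s + 4\<bar> \<le> B" unfolding abs_le_iff using hB s_def by (intro conjI; linarith)
    have bty5: "\<bar>s + 5\<bar> \<le> B" unfolding abs_le_iff using hB s_def by (intro conjI; linarith)
    note bb = btx bt0 bt1 bt2 bt3 bt4 bt5 bt6 bt7 bt8 bt9 bt10 bt11 bt12 bt13 bt14 bt15 bt16 bt17 bt18 bt20 bt22 bt23 bt24 bt25 bty1 bty2 bty3 bty4 bty5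
    show ?thesis
    apply (rule reach_step)
    apply simp
    apply (simp add: c bb)
    apply (simp add: c sp' s100 A1_def[symmetric] c1_def[symmetric] K_def[symmetric] cs K0 split del: if_split)
    apply (rule reach_step)
    apply simp
    apply (simp add: c bb)
    apply (simp add: c sp' s100 A1_def[symmetric] c1_def[symmetric] K_def[symmetric] cs K0 split del: if_split)
    apply (rule reach_step)
    apply simp
    apply (simp add: c bb)
    apply (simp add: c sp' s100 A1_def[symmetric] c1_def[symmetric] K_def[symmetric] cs K0 split del: if_split)
    apply (rule reach_step)
    apply simp
    apply (simp add: c bb)
    apply (simp add: c sp' s100 A1_def[symmetric] c1_def[symmetric] K_def[symmetric] cs K0 split del: if_split)
    apply (rule reach_step)
    apply simp
    apply (simp add: c bb)
    apply (simp add: c sp' s100 A1_def[symmetric] c1_def[symmetric] K_def[symmetric] cs K0 split del: if_split)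
    apply (rule reach_step)
    apply simp
    apply (simp add: c bb)
    apply (simp add: c sp' s100 A1_def[symmetric] c1_def[symmetric] K_def[symmetric] cs K0 split del: if_split)
    apply (rule reach_step)
    apply simp
    apply (simp add: c bb)
    apply (simp add: c sp' s100 A1_def[symmetric] c1_def[symmetric] K_def[symmetric] cs K0 split del: if_split)
    apply (rule reach_step)
    apply simp
    apply (simp add: c bb)
    apply (simp add: c sp' s100 A1_def[symmetric] c1_def[symmetric] K_def[symmetric] cs K0 split del: if_split)
    apply (rule reach_step)
    apply simp
    apply (simp add: c bb)
    apply (simp add: c sp' s100 A1_def[symmetric] c1_def[symmetric] K_def[symmetric] cs K0 split del: if_split)
    apply (rule reach_step)
    apply simp
    apply (simp add: c bb)
    apply (simp add: c sp' s100 A1_def[symmetric] c1_def[symmetric] K_def[symmetric] cs K0 split del: if_split)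
    apply (rule reach_step)
    apply simp
    apply (simp add: c bb)
    apply (simp add: c sp' s100 A1_def[symmetric] c1_def[symmetric] K_def[symmetric] cs K0 split del: if_split)
    apply (rule reach_step)
    apply simp
    apply (simp add: c bb)
    apply (simp add: c sp' s100 A1_def[symmetric] c1_def[symmetric] K_def[symmetric] cs K0 split del: if_split)
    apply (rule reach_step)
    apply simp
    apply (simp add: c bb)
    apply (simp add: c sp' s100 A1_def[symmetric] c1_def[symmetric] K_def[symmetric] cs K0 split del: if_split)
    apply (rule reach_step)
    apply simp
    apply (simp add: c bb)
    apply (simp add: c sp' s100 A1_def[symmetric] c1_def[symmetric] K_def[symmetric] cs K0 split del: if_split)
    apply (rule reach_step)
    apply simp
    apply (simp add: c bb)
    apply (simp add: c sp' s100 A1_def[symmetric] c1_def[symmetric] K_def[symmetric] cs K0 split del: if_split)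
    apply (rule reach_step)
    apply simp
    apply (simp add: c bb)
    apply (simp add: c sp' s100 A1_def[symmetric] c1_def[symmetric] K_def[symmetric] cs K0 split del: if_split)
    apply (rule reach_done)
     apply (simp add: c bb)
    apply (simp add: c sp' s100 A1_def[symmetric] c1_def[symmetric] K_def[symmetric] cs K0 common_def bb s_def[symmetric] split del: if_split)
    apply (rule stk_same[OF c(7)])
    apply (auto simp: s_def)
    done
  next
    case False
    define K where "K = (A * N + c) div m"
    have cs: "\<not> m < 2 * A" "(m < 2 * A) = False" using False by auto
    have K0: "K = 0" using K0 False unfolding K_def by simp
    have a1: "0 \<le> A" "A \<le> m" using r by auto
    have c1r: "0 \<le> c" "c < m" using r by auto
    have A1N: "0 \<le> A*N" "A*N \<le> P*P" using r a1 by (auto intro: mult_mono)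
    have Kb: "0 \<le> K" "K \<le> A*N + c"
    proof -
      have x0: "0 \<le> A*N + c" using A1N c1r by simp
      show "0 \<le> K" unfolding K_def using x0 r(1) by (simp add: pos_imp_zdiv_nonneg_iff)
      have "(A*N + c) div m \<le> (A*N + c) div 1" by (rule zdiv_mono2) (use x0 r(1) in auto)
      then show "K \<le> A*N + c" unfolding K_def by simp
    qed
        have bf0: "0 \<le> B" using hB hB' s_def r PP AN A1N a1 c1r Kb P0 by linarith
    have bf1: "\<bar>2 * A\<bar> \<le> B" unfolding abs_le_iff using hB hB' s_def r PP AN A1N a1 c1r Kb P0 by (intro conjI; linarith)
    have bf2: "\<bar>1::int\<bar> \<le> B" unfolding abs_le_iff using hB hB' s_def r PP AN A1N a1 c1r Kb P0 by (intro conjI; linarith)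
    have bf3: "\<bar>A * N\<bar> \<le> B" unfolding abs_le_iff using hB hB' s_def r PP AN A1N a1 c1r Kb P0 by (intro conjI; linarith)
    have bf4: "\<bar>A * N + c\<bar> \<le> B" unfolding abs_le_iff using hB hB' s_def r PP AN A1N a1 c1r Kb P0 by (intro conjI; linarith)
    have bf5: "\<bar>K\<bar> \<le> B" unfolding abs_le_iff using hB hB' s_def r PP AN A1N a1 c1r Kb P0 by (intro conjI; linarith)
    have bf6: "\<bar>s\<bar> \<le> B" unfolding abs_le_iff using hB hB' s_def r PP AN A1N a1 c1r Kb P0 by (intro conjI; linarith)
    have bf7: "\<bar>1+s\<bar> \<le> B" unfolding abs_le_iff using hB hB' s_def r PP AN A1N a1 c1r Kb P0 by (intro conjI; linarith)
    have bf8: "\<bar>2+s\<bar> \<le> B" unfolding abs_le_iff using hB hB' s_def r PP AN A1N a1 c1r Kb P0 by (intro conjI; linarith)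
    have bf9: "\<bar>3+s\<bar> \<le> B" unfolding abs_le_iff using hB hB' s_def r PP AN A1N a1 c1r Kb P0 by (intro conjI; linarith)
    have bf10: "\<bar>4+s\<bar> \<le> B" unfolding abs_le_iff using hB hB' s_def r PP AN A1N a1 c1r Kb P0 by (intro conjI; linarith)
    have bf11: "\<bar>5+s\<bar> \<le> B" unfolding abs_le_iff using hB hB' s_def r PP AN A1N a1 c1r Kb P0 by (intro conjI; linarith)
    have bf12: "\<bar>s+5\<bar> \<le> B" unfolding abs_le_iff using hB hB' s_def r PP AN A1N a1 c1r Kb P0 by (intro conjI; linarith)
    have bf13: "\<bar>m\<bar> \<le> B" unfolding abs_le_iff using hB hB' s_def r PP AN A1N a1 c1r Kb P0 by (intro conjI; linarith)
    have bf14: "\<bar>A\<bar> \<le> B" unfolding abs_le_iff using hB hB' s_def r PP AN A1N a1 c1r Kb P0 by (intro conjI; linarith)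
    have bf15: "\<bar>c\<bar> \<le> B" unfolding abs_le_iff using hB hB' s_def r PP AN A1N a1 c1r Kb P0 by (intro conjI; linarith)
    have bf16: "\<bar>N\<bar> \<le> B" unfolding abs_le_iff using hB hB' s_def r PP AN A1N a1 c1r Kb P0 by (intro conjI; linarith)
    have bf17: "\<bar>K - 1\<bar> \<le> B" unfolding abs_le_iff using hB hB' s_def r PP AN A1N a1 c1r Kb P0 by (intro conjI; linarith)
    have bf18: "\<bar>c - m\<bar> \<le> B" unfolding abs_le_iff using hB hB' s_def r PP AN A1N a1 c1r Kb P0 by (intro conjI; linarith)
    have bf20: "\<bar>- m\<bar> \<le> B" unfolding abs_le_iff using hB hB' s_def r PP AN A1N a1 c1r Kb P0 by (intro conjI; linarith)
    have bfx: "1 \<le> B" using hB hB' P0 PP by linarith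
    have bfy1: "\<bar>s + 1\<bar> \<le> B" unfolding abs_le_iff using hB s_def by (intro conjI; linarith)
    have bfy2: "\<bar>s + 2\<bar> \<le> B" unfolding abs_le_iff using hB s_def by (intro conjI; linarith)
    have bfy3: "\<bar>s + 3\<bar> \<le> B" unfolding abs_le_iff using hB s_def by (intro conjI; linarith)
    have bfy4: "\<bar>s + 4\<bar> \<le> B" unfolding abs_le_iff using hB s_def by (intro conjI; linarith)
    have bfy5: "\<bar>s + 5\<bar> \<le> B" unfolding abs_le_iff using hB s_def by (intro conjI; linarith)
    note bb = bfx bf0 bf1 bf2 bf3 bf4 bf5 bf6 bf7 bf8 bf9 bf10 bf11 bf12 bf13 bf14 bf15 bf16 bf17 bf18 bf20 bfy1 bfy2 bfy3 bfy4 bfy5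
    show ?thesis
    apply (rule reach_step)
    apply simp
    apply (simp add: c bb)
    apply (simp add: c sp' s100 K_def[symmetric] cs K0 split del: if_split)
    apply (rule reach_step)
    apply simp
    apply (simp add: c bb)
    apply (simp add: c sp' s100 K_def[symmetric] cs K0 split del: if_split)
    apply (rule reach_step)
    apply simp
    apply (simp add: c bb)
    apply (simp add: c sp' s100 K_def[symmetric] cs K0 split del: if_split)
    apply (rule reach_step)
    apply simp
    apply (simp add: c bb)
    apply (simp add: c sp' s100 K_def[symmetric] cs K0 split del: if_split)
    apply (rule reach_step)
    apply simp
    apply (simp add: c bb)
    apply (simp add: c sp' s100 K_def[symmetric] cs K0 split del: if_split)
    apply (rule reach_step)
    apply simp
    apply (simp add: c bb)
    apply (simp add: c sp' s100 K_def[symmetric] cs K0 split del: if_split)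
    apply (rule reach_step)
    apply simp
    apply (simp add: c bb)
    apply (simp add: c sp' s100 K_def[symmetric] cs K0 split del: if_split)
    apply (rule reach_step)
    apply simp
    apply (simp add: c bb)
    apply (simp add: c sp' s100 K_def[symmetric] cs K0 split del: if_split)
    apply (rule reach_step)
    apply simp
    apply (simp add: c bb)
    apply (simp add: c sp' s100 K_def[symmetric] cs K0 split del: if_split)
    apply (rule reach_step)
    apply simp
    apply (simp add: c bb)
    apply (simp add: c sp' s100 K_def[symmetric] cs K0 split del: if_split)
    apply (rule reach_step)
    apply simp
    apply (simp add: c bb)
    apply (simp add: c sp' s100 K_def[symmetric] cs K0 split del: if_split)
    apply (rule reach_done)
     apply (simp add: c bb)
    apply (simp add: c sp' s100 K_def[symmetric] cs K0 common_def bb s_def[symmetric] split del: if_split)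
    apply (rule stk_same[OF c(7)])
    apply (auto simp: s_def)
    done
  qed
qed


lemma halve:
  fixes m A c N :: int
  assumes "1 \<le> m" "0 \<le> A" "2*A \<le> m" "0 \<le> c" "c < m" "0 \<le> N"
  shows "2 * ((A*N + c) div m) \<le> N + 1"
proof -
  define K where "K = (A*N + c) div m"
  have m0: "0 < m" using assms by simp
  have KM: "K*m \<le> A*N + c" unfolding K_def
    using div_mult_mod_eq[of "A*N+c" m] pos_mod_sign[OF m0, of "A*N+c"] by linarith
  have "2*A*N \<le> m*N" using assms by (simp add: mult_right_mono)
  then have "m * (2*K) < m * (N + 2)" using KM assms by (simp add: algebra_simps)
  then have "2*K < N + 2" using m0 by (simp add: mult_less_cancel_left)
  then show ?thesis unfolding K_def by simp
qed

lemma backf_eq: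
  "backf (m, A, c, N, rr) j = (if 0 < rr then N - backasc m A c j else backasc m A c j)"
  unfolding backf_def backasc_def hmod_def Let_def by simp

lemma term_case:
  assumes fi: "finv i1 B fs m A c N mem"
    and r: "1 \<le> m" "m \<le> P" "0 \<le> A" "A < m" "0 \<le> c" "c < m" "0 \<le> N" "N \<le> P"
    and hB: "(P+1)*(P+1) + 2*P \<le> B" "110 + 5*int(length fs) \<le> B"
    and K0: "0 = ((if m < 2 * A then m - A else A) * N + (if m < 2 * A then (A*N + c) mod m else c)) div m"
  shows "reach prog B (17, mem) 20 (\<lambda>c'. fst c' = 53 \<and> common i1 B fs (snd c') \<and>
     snd c' 9 = 100 + 5 * int (length fs) \<and> ismin m A c N (snd c' 14))"
proof (rule reach_mono[OF term_block[OF fi r hB K0]])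
  have "ismin m A c N (if m < 2 * A then N else 0)"
  proof (cases "m < 2 * A")
    case True
    have "ismin m (m - A) ((A*N + c) mod m) N 0"
      by (rule term_ok) (use r K0 True in auto)
    from reflect_ok[OF _ this] show ?thesis using True r by simp
  next
    case False
    have "ismin m A c N 0" by (rule term_ok) (use r K0 False in auto)
    then show ?thesis using False by simp
  qed
  then show "\<And>c'. fst c' = 53 \<and> common i1 B fs (snd c') \<and>
     snd c' 9 = 100 + 5 * int (length fs) \<and> snd c' 14 = (if m < 2 * A then N else 0) \<Longrightarrow>
     fst c' = 53 \<and> common i1 B fs (snd c') \<and>
     snd c' 9 = 100 + 5 * int (length fs) \<and> ismin m A c N (snd c' 14)" by auto
qed simp

lemma main_loop:
  fixes P B i1 :: int
  assumes H1: "(P+1)*(P+1) + 2*P \<le> B" and H2: "115 + 5*P \<le> B"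
  shows "finv i1 B fs m A c N mem \<Longrightarrow> 1 \<le> m \<Longrightarrow> m \<le> P \<Longrightarrow> 0 \<le> A \<Longrightarrow> A < m \<Longrightarrow> 0 \<le> c \<Longrightarrow> c < m \<Longrightarrow>
    0 \<le> N \<Longrightarrow> int (length fs) + N \<le> P - 1 \<Longrightarrow> N + 1 \<le> 2^d \<Longrightarrow>
    reach prog B (17, mem) (60 * (d+1)) (\<lambda>c'. fst c' = 53 \<and> common i1 B fs (snd c') \<and>
       snd c' 9 = 100 + 5 * int (length fs) \<and> ismin m A c N (snd c' 14))"
proof (induction d arbitrary: fs m A c N mem)
  case 0
  have N0: "N = 0" using "0.prems" by simp
  have hB2: "110 + 5*int(length fs) \<le> B" using "0.prems" H2 by linarith
  have K0: "0 = ((if m < 2 * A then m - A else A) * N + (if m < 2 * A then (A*N + c) mod m else c)) div m"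
    using N0 "0.prems" by (simp add: div_pos_pos_trivial)
  show ?case
    by (rule reach_mono[OF term_case[OF "0.prems"(1-7) _ _ H1 hB2 K0]]) (use "0.prems" in auto)
next
  case (Suc d)
  note pr = Suc.prems
  have hB2: "110 + 5*int(length fs) \<le> B" using pr H2 by linarith
  have NP: "N \<le> P" using pr by simp
  define A1 where "A1 = (if m < 2 * A then m - A else A)"
  define c1 where "c1 = (if m < 2 * A then (A*N + c) mod m else c)"
  define K where "K = (A1 * N + c1) div m"
  have a1: "0 \<le> A1" "A1 \<le> m" "2 * A1 \<le> m" using pr unfolding A1_def by auto
  have c1r: "0 \<le> c1" "c1 < m" using pr unfolding c1_def by auto
  show ?case
  proof (cases "K = 0")
    case True
    have K0: "0 = ((if m < 2 * A then m - A else A) * N + (if m < 2 * A then (A*N + c) mod m else c)) div m"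
      using True unfolding K_def A1_def c1_def by simp
    show ?thesis
      by (rule reach_mono[OF term_case[OF pr(1-8) NP H1 hB2 K0]]) auto
  next
    case False
    have K1: "1 \<le> K" using False unfolding K_def using a1 c1r pr
      by (smt (verit) mult_nonneg_nonneg pos_imp_zdiv_nonneg_iff)
    have A1p: "1 \<le> A1"
    proof (rule ccontr)
      assume "\<not> 1 \<le> A1"
      then have "A1 = 0" using a1 by simp
      then have "K = 0" unfolding K_def using c1r by (simp add: div_pos_pos_trivial)
      then show False using False by simp
    qed
    have hv: "2 * K \<le> N + 1" unfolding K_def by (rule halve) (use a1 c1r pr in auto)
    have KN: "K \<le> N" using hv K1 by simp
    have K0': "0 < ((if m < 2 * A then m - A else A) * N + (if m < 2 * A then (A*N + c) mod m else c)) div m"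
      using K1 unfolding K_def A1_def c1_def by simp
    define rr :: int where "rr = (if m < 2 * A then 1 else 0)"
    have push: "reach prog B (17, mem) 30 (\<lambda>c'. fst c' = 17 \<and>
      finv i1 B (fs @ [(m, A1, c1, N, rr)]) A1 ((-m) mod A1) ((c1 - m) mod A1) (K - 1) (snd c'))"
      using push_block[OF pr(1-8) NP H1 hB2 K0'] unfolding A1_def[symmetric] c1_def[symmetric] K_def[symmetric] rr_def .
    have step2: "reach prog B c' (60 * (d + 1) + 30) (\<lambda>c'. fst c' = 53 \<and> common i1 B fs (snd c') \<and>
       snd c' 9 = 100 + 5 * int (length fs) \<and> ismin m A c N (snd c' 14))"
      if q: "fst c' = 17 \<and> finv i1 B (fs @ [(m, A1, c1, N, rr)]) A1 ((-m) mod A1) ((c1 - m) mod A1) (K - 1) (snd c')"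
      for c'
    proof -
      have cc: "c' = (17, snd c')" using q by (cases c') auto
      have ih: "reach prog B (17, snd c') (60 * (d+1)) (\<lambda>c''. fst c'' = 53 \<and> common i1 B (fs @ [(m, A1, c1, N, rr)]) (snd c'') \<and>
         snd c'' 9 = 100 + 5 * int (length (fs @ [(m, A1, c1, N, rr)])) \<and>
         ismin A1 ((-m) mod A1) ((c1 - m) mod A1) (K - 1) (snd c'' 14))"
      proof (rule Suc.IH)
        show "finv i1 B (fs @ [(m, A1, c1, N, rr)]) A1 ((-m) mod A1) ((c1 - m) mod A1) (K - 1) (snd c')" using q by simp
        show "1 \<le> A1" by (rule A1p)
        show "A1 \<le> P" using a1 pr by simp
        show "0 \<le> (-m) mod A1" "(-m) mod A1 < A1" "0 \<le> (c1 - m) mod A1" "(c1 - m) mod A1 < A1" using A1p by auto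
        show "0 \<le> K - 1" using K1 by simp
        show "int (length (fs @ [(m, A1, c1, N, rr)])) + (K - 1) \<le> P - 1" using KN pr by simp
        show "K - 1 + 1 \<le> 2 ^ d" using hv pr by simp
      qed
      have popped: "reach prog B c'' 30 (\<lambda>c'. fst c' = 53 \<and> common i1 B fs (snd c') \<and>
       snd c' 9 = 100 + 5 * int (length fs) \<and> ismin m A c N (snd c' 14))"
        if q2: "fst c'' = 53 \<and> common i1 B (fs @ [(m, A1, c1, N, rr)]) (snd c'') \<and>
         snd c'' 9 = 100 + 5 * int (length (fs @ [(m, A1, c1, N, rr)])) \<and>
         ismin A1 ((-m) mod A1) ((c1 - m) mod A1) (K - 1) (snd c'' 14)" for c''
      proof -
        define j where "j = snd c'' 14"
        have cc2: "c'' = (53, snd c'')" using q2 by (cases c'') auto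
        have jm: "ismin A1 ((-m) mod A1) ((c1 - m) mod A1) (K - 1) j" using q2 j_def by simp
        have jr: "0 \<le> j" "j \<le> K - 1" using jm unfolding ismin_def by auto
        have yr: "0 \<le> ((j+1)*m - c1 + A1 - 1) div A1" "((j+1)*m - c1 + A1 - 1) div A1 \<le> N"
          using yk_range[of A1 m c1 N j] A1p a1 c1r pr jr unfolding K_def by auto
        have pb: "reach prog B (53, snd c'') 30 (\<lambda>c'. fst c' = 53 \<and> common i1 B fs (snd c') \<and>
           snd c' 9 = 100 + 5 * int (length fs) \<and> snd c' 14 = backf (m, A1, c1, N, rr) j)"
        proof (rule pop_block)
          show "common i1 B (fs @ [(m, A1, c1, N, rr)]) (snd c'')" using q2 by simp
          show "snd c'' 9 = 105 + 5 * int (length fs)" using q2 by simp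
          show "snd c'' 14 = j" using j_def by simp
          show "0 \<le> j" "j \<le> P" using jr KN pr by auto
          show "1 \<le> m" "m \<le> P" "1 \<le> A1" "A1 \<le> P" "0 \<le> c1" "c1 \<le> P" "0 \<le> N" "N \<le> P"
            using pr A1p a1 c1r by auto
          show "0 \<le> ((j+1)*m - c1 + A1 - 1) div A1" "((j+1)*m - c1 + A1 - 1) div A1 \<le> P" using yr NP by auto
          show "(P+1)*(P+1) + 2*P \<le> B" by (rule H1)
          show "105 + 5*int(length fs) \<le> B" using hB2 by simp
        qed
        have asc: "ismin m A1 c1 N (backasc m A1 c1 j)"
          by (rule ascend_ok) (use A1p a1 c1r pr K1 jm in \<open>auto simp: K_def\<close>)
        have fin: "ismin m A c N (backf (m, A1, c1, N, rr) j)"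
        proof (cases "m < 2 * A")
          case True
          have "ismin m (m - A) ((A*N + c) mod m) N (backasc m A1 c1 j)"
            using asc True unfolding A1_def c1_def by simp
          from reflect_ok[OF _ this] show ?thesis using True pr unfolding backf_eq rr_def by simp
        next
          case False
          show ?thesis using asc False unfolding backf_eq rr_def A1_def c1_def by simp
        qed
        show ?thesis using cc2 reach_mono[OF pb order_refl] fin by auto
      qed
      have "reach prog B (17, snd c') (60 * (d+1) + 30) (\<lambda>c'. fst c' = 53 \<and> common i1 B fs (snd c') \<and>
       snd c' 9 = 100 + 5 * int (length fs) \<and> ismin m A c N (snd c' 14))"
        by (rule reach_trans[OF ih popped])
      then show ?thesis using cc by simp
    qed
    have "reach prog B (17, mem) (30 + (60 * (d + 1) + 30)) (\<lambda>c'. fst c' = 53 \<and> common i1 B fs (snd c') \<and>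
       snd c' 9 = 100 + 5 * int (length fs) \<and> ismin m A c N (snd c' 14))"
      by (rule reach_trans[OF push step2])
    then show ?thesis by (rule reach_mono) auto
  qed
qed


lemma step_unary [simp]:
  "step prog ((Suc 0), mm) = exec (Const 21 1) ((Suc 0), mm)"
  "step prog ((Suc (Suc 0)), mm) = exec (Const 23 5) ((Suc (Suc 0)), mm)"
  "step prog ((Suc (Suc (Suc 0))), mm) = exec (Const 24 100) ((Suc (Suc (Suc 0))), mm)"
  "step prog ((Suc (Suc (Suc (Suc 0)))), mm) = exec (Const 9 100) ((Suc (Suc (Suc (Suc 0)))), mm)"
  "step prog ((Suc (Suc (Suc (Suc (Suc 0))))), mm) = exec (Jlt 20 1 8) ((Suc (Suc (Suc (Suc (Suc 0))))), mm)"
  "step prog ((Suc (Suc (Suc (Suc (Suc (Suc 0)))))), mm) = exec (Add 0 3 20) ((Suc (Suc (Suc (Suc (Suc (Suc 0)))))), mm)"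
  by (simp_all add: step_def halted_def prog_def)

lemma halt_unary: "halted prog ((Suc (Suc (Suc (Suc (Suc (Suc (Suc 0))))))), mm)" by (simp add: halted_def prog_def)

lemma init_mem:
  "snd (init [p, a, b, i1, i2]) 0 = p" "snd (init [p, a, b, i1, i2]) 1 = a"
  "snd (init [p, a, b, i1, i2]) 2 = b" "snd (init [p, a, b, i1, i2]) 3 = i1"
  "snd (init [p, a, b, i1, i2]) 4 = i2"
  "fst (init [p, a, b, i1, i2]) = 0"
  by (simp_all add: init_def)

lemma init_bnd:
  assumes "\<bar>p\<bar> \<le> B" "\<bar>a\<bar> \<le> B" "\<bar>b\<bar> \<le> B" "\<bar>i1\<bar> \<le> B" "\<bar>i2\<bar> \<le> B" "0 \<le> B"
  shows "bnd B (snd (init [p, a, b, i1, i2]))"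
  unfolding bnd_def init_def
proof
  fix x :: int
  show "\<bar>snd (0::nat, \<lambda>i. if 0 \<le> i \<and> nat i < length [p, a, b, i1, i2] then [p, a, b, i1, i2] ! nat i else 0) x\<bar> \<le> B"
  proof (cases "0 \<le> x \<and> nat x < 5")
    case True
    then have "nat x = 0 \<or> nat x = 1 \<or> nat x = 2 \<or> nat x = 3 \<or> nat x = 4" by auto
    then show ?thesis using True assms by auto
  next
    case False
    then show ?thesis using assms by auto
  qed
qed

lemma a0_block:
  assumes "bnd B (snd (init [p, a, b, i1, i2]))" "a = 0" "\<bar>i1\<bar> \<le> B" "100 \<le> B"
  shows "reach prog B (init [p, a, b, i1, i2]) 10 (\<lambda>c. halted prog c \<and> snd c 0 = i1)"
proof -
  define mm where "mm = snd (init [p, a, b, i1, i2])"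
  have ii: "init [p, a, b, i1, i2] = (0, mm)" unfolding mm_def using init_mem(6) by (metis prod.collapse)
  have mv: "mm 0 = p" "mm 1 = a" "mm 2 = b" "mm 3 = i1" "mm 4 = i2" "bnd B mm" using init_mem assms unfolding mm_def by auto
  have bb: "\<bar>0::int\<bar> \<le> B" "\<bar>1::int\<bar> \<le> B" "\<bar>5::int\<bar> \<le> B" "\<bar>100::int\<bar> \<le> B" "0 \<le> B" "1 \<le> B" "5 \<le> B" "100 \<le> B" using assms by auto
  show ?thesis
    unfolding ii
    apply (rule reach_step)
    apply simp
    apply (simp add: mv bb assms)
    apply (simp add: mv assms split del: if_split)
    apply (rule reach_step)
    apply simp
    apply (simp add: mv bb assms)
    apply (simp add: mv assms split del: if_split)
    apply (rule reach_step)
    apply simp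
    apply (simp add: mv bb assms)
    apply (simp add: mv assms split del: if_split)
    apply (rule reach_step)
    apply simp
    apply (simp add: mv bb assms)
    apply (simp add: mv assms split del: if_split)
    apply (rule reach_step)
    apply simp
    apply (simp add: mv bb assms)
    apply (simp add: mv assms split del: if_split)
    apply (rule reach_step)
    apply simp
    apply (simp add: mv bb assms)
    apply (simp add: mv assms split del: if_split)
    apply (rule reach_step)
    apply simp
    apply (simp add: mv bb assms)
    apply (simp add: mv assms split del: if_split)
    apply (rule reach_done)
     apply (simp add: mv bb assms)
    apply (simp add: mv assms halt_unary)
    done
qed

lemma end_block:
  assumes "common i1 B [] mem" "mem 9 = 100" "mem 14 = y" "\<bar>y + i1\<bar> \<le> B"
  shows "reach prog B (53, mem) 5 (\<lambda>c. halted prog c \<and> snd c 0 = y + i1)"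
proof -
  have c: "mem 20 = 0" "mem 21 = 1" "mem 23 = 5" "mem 24 = 100" "mem 3 = i1" "bnd B mem"
    using assms(1) unfolding common_def by auto
  show ?thesis
    apply (rule reach_step)
    apply simp
    apply (simp add: c assms)
    apply (simp add: c assms split del: if_split)
    apply (rule reach_step)
    apply simp
    apply (simp add: c assms)
    apply (simp add: c assms split del: if_split)
    apply (rule reach_done)
     apply (simp add: c assms)
    apply (simp add: c assms prog_halt)
    done
qed

lemma init_block:
  assumes r: "2 \<le> p" "0 < a" "a < p" "0 \<le> b" "b < p" "0 < i1" "i1 < i2"
    and hB: "(p + i2) * (p + i2) \<le> B" "115 \<le> B"
    and bi: "bnd B (snd (init [p, a, b, i1, i2]))"
  shows "reach prog B (init [p, a, b, i1, i2]) 20 (\<lambda>c'. fst c' = 17 \<and>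
     finv i1 B [] p a ((a*i1+b) mod p) (if i2 - i1 < p - 1 then i2 - i1 else p - 1) (snd c'))"
proof -
  define mm where "mm = snd (init [p, a, b, i1, i2])"
  have ii: "init [p, a, b, i1, i2] = (0, mm)" unfolding mm_def using init_mem(6) by (metis prod.collapse)
  have mv: "mm 0 = p" "mm 1 = a" "mm 2 = b" "mm 3 = i1" "mm 4 = i2" "bnd B mm" using init_mem bi unfolding mm_def by auto
  have ai: "0 \<le> a*i1" "a*i1 \<le> p*i2" using r by (auto intro: mult_mono)
  have pp: "p \<le> p*p" "0 \<le> i2*i2" "0 \<le> i2*p" using r by auto
  have "(p+i2)*(p+i2) = p*p + 2*(i2*p) + i2*i2" "p*i2 = i2*p" by (simp_all add: algebra_simps)
  then have sq: "p*i2 + p \<le> (p + i2) * (p + i2)" using pp by linarith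
  have pi0: "p \<le> p*i2" "i2 \<le> p*i2" using r by auto
  have pi1: "p*i2 + p \<le> B" using sq hB by linarith
  have pi: "p*i2 + p \<le> B" "p \<le> B" "i2 \<le> B" using pi1 pi0 r by linarith+
  have md: "0 \<le> (a*i1+b) mod p" "(a*i1+b) mod p < p" using r by auto
  have mdb: "(a*i1+b) mod p \<le> B" using md pi by linarith
  have bb: "\<bar>0::int\<bar> \<le> B" "\<bar>1::int\<bar> \<le> B" "\<bar>5::int\<bar> \<le> B" "\<bar>100::int\<bar> \<le> B"
    "\<bar>a*i1\<bar> \<le> B" "\<bar>a*i1+b\<bar> \<le> B" "\<bar>(a*i1+b) mod p\<bar> \<le> B" "\<bar>i2 - i1\<bar> \<le> B" "\<bar>p - 1\<bar> \<le> B"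
    "\<bar>p\<bar> \<le> B" "\<bar>a\<bar> \<le> B" "1 \<le> B" "0 \<le> B" "5 \<le> B" "100 \<le> B"
    using r hB ai sq md pi mdb by (auto simp: abs_le_iff)
  show ?thesis
  proof (cases "i2 - i1 < p - 1")
    case True
    have cs: "i2 - i1 < p - 1" "(i2 - i1 < p - 1) = True" using True by auto
    show ?thesis
      unfolding ii
      apply (rule reach_step)
      apply simp
      apply (simp add: mv bb)
      apply (simp add: mv r cs split del: if_split)
      apply (rule reach_step)
      apply simp
      apply (simp add: mv bb)
      apply (simp add: mv r cs split del: if_split)
      apply (rule reach_step)
      apply simp
      apply (simp add: mv bb)
      apply (simp add: mv r cs split del: if_split)
      apply (rule reach_step)
      apply simp
      apply (simp add: mv bb)
      apply (simp add: mv r cs split del: if_split)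
      apply (rule reach_step)
      apply simp
      apply (simp add: mv bb)
      apply (simp add: mv r cs split del: if_split)
      apply (rule reach_step)
      apply simp
      apply (simp add: mv bb)
      apply (simp add: mv r cs split del: if_split)
      apply (rule reach_step)
      apply simp
      apply (simp add: mv bb)
      apply (simp add: mv r cs split del: if_split)
      apply (rule reach_step)
      apply simp
      apply (simp add: mv bb)
      apply (simp add: mv r cs split del: if_split)
      apply (rule reach_step)
      apply simp
      apply (simp add: mv bb)
      apply (simp add: mv r cs split del: if_split)
      apply (rule reach_step)
      apply simp
      apply (simp add: mv bb)
      apply (simp add: mv r cs split del: if_split)
      apply (rule reach_step)
      apply simp
      apply (simp add: mv bb)
      apply (simp add: mv r cs split del: if_split)
      apply (rule reach_step)
      apply simp
      apply (simp add: mv bb)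
      apply (simp add: mv r cs split del: if_split)
      apply (rule reach_step)
      apply simp
      apply (simp add: mv bb)
      apply (simp add: mv r cs split del: if_split)
      apply (rule reach_step)
      apply simp
      apply (simp add: mv bb)
      apply (simp add: mv r cs split del: if_split)
      apply (rule reach_done)
       apply (simp add: mv bb)
      apply (simp add: mv r cs finv_def common_def stk_def bb)
      done
  next
    case False
    have cs: "\<not> i2 - i1 < p - 1" "(i2 - i1 < p - 1) = False" using False by auto
    show ?thesis
      unfolding ii
      apply (rule reach_step)
      apply simp
      apply (simp add: mv bb)
      apply (simp add: mv r cs split del: if_split)
      apply (rule reach_step)
      apply simp
      apply (simp add: mv bb)
      apply (simp add: mv r cs split del: if_split)
      apply (rule reach_step)
      apply simp
      apply (simp add: mv bb)
      apply (simp add: mv r cs split del: if_split)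
      apply (rule reach_step)
      apply simp
      apply (simp add: mv bb)
      apply (simp add: mv r cs split del: if_split)
      apply (rule reach_step)
      apply simp
      apply (simp add: mv bb)
      apply (simp add: mv r cs split del: if_split)
      apply (rule reach_step)
      apply simp
      apply (simp add: mv bb)
      apply (simp add: mv r cs split del: if_split)
      apply (rule reach_step)
      apply simp
      apply (simp add: mv bb)
      apply (simp add: mv r cs split del: if_split)
      apply (rule reach_step)
      apply simp
      apply (simp add: mv bb)
      apply (simp add: mv r cs split del: if_split)
      apply (rule reach_step)
      apply simp
      apply (simp add: mv bb)
      apply (simp add: mv r cs split del: if_split)
      apply (rule reach_step)
      apply simp
      apply (simp add: mv bb)
      apply (simp add: mv r cs split del: if_split)
      apply (rule reach_step)
      apply simp
      apply (simp add: mv bb)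
      apply (simp add: mv r cs split del: if_split)
      apply (rule reach_step)
      apply simp
      apply (simp add: mv bb)
      apply (simp add: mv r cs split del: if_split)
      apply (rule reach_step)
      apply simp
      apply (simp add: mv bb)
      apply (simp add: mv r cs split del: if_split)
      apply (rule reach_step)
      apply simp
      apply (simp add: mv bb)
      apply (simp add: mv r cs split del: if_split)
      apply (rule reach_step)
      apply simp
      apply (simp add: mv bb)
      apply (simp add: mv r cs split del: if_split)
      apply (rule reach_done)
       apply (simp add: mv bb)
      apply (simp add: mv r cs finv_def common_def stk_def bb)
      done
  qed
qed


lemma hmod_shift: "hmod p a b (i1 + z) = hmod p a ((a*i1+b) mod p) z"
proof -
  have "(a*(i1+z) + b) mod p = (a*z + (a*i1+b)) mod p" by (simp add: algebra_simps)
  also have "\<dots> = (a*z + (a*i1+b) mod p) mod p" by (simp add: mod_add_right_eq)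
  finally show ?thesis unfolding hmod_def .
qed

lemma argmin_zero:
  assumes "i1 \<le> i2"
  shows "argmin_on (hmod p 0 b) {i1..i2} = i1"
  unfolding argmin_on_def
  by (rule Least_equality) (use assms in \<open>auto simp: hmod_def\<close>)

lemma argmin_main:
  fixes p a b i1 i2 y :: int
  assumes pr: "prime p" and r: "0 < a" "a < p" "i1 < i2"
    and y: "ismin p a ((a*i1+b) mod p) (if i2 - i1 < p - 1 then i2 - i1 else p - 1) y"
  shows "argmin_on (hmod p a b) {i1..i2} = y + i1"
proof -
  define N0 where "N0 = (if i2 - i1 < p - 1 then i2 - i1 else p - 1)"
  define c0 where "c0 = (a*i1+b) mod p"
  have p0: "0 < p" using r by simp
  have ym: "0 \<le> y" "y \<le> N0" "\<And>z. 0 \<le> z \<Longrightarrow> z \<le> N0 \<Longrightarrow> hmod p a c0 y \<le> hmod p a c0 z"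
    using y unfolding ismin_def N0_def c0_def by auto
  have N0b: "N0 \<le> i2 - i1" "N0 \<le> p - 1" unfolding N0_def by auto
  have sh: "hmod p a b u = hmod p a c0 (u - i1)" for u
    using hmod_shift[of p a b i1 "u - i1"] unfolding c0_def by simp
  have minx: "hmod p a b (y + i1) \<le> hmod p a b u" if u: "u \<in> {i1..i2}" for u
  proof -
    define z where "z = u - i1"
    have z: "0 \<le> z" "z \<le> i2 - i1" using u unfolding z_def by auto
    have "hmod p a c0 y \<le> hmod p a c0 z"
    proof (cases "z \<le> N0")
      case True then show ?thesis using ym z by simp
    next
      case False
      then have "N0 = p - 1" using z unfolding N0_def by (auto split: if_splits)
      have e: "hmod p a c0 (z mod p) = hmod p a c0 z" unfolding hmod_def
        by (metis mod_add_left_eq mod_mult_right_eq)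
      have "0 \<le> z mod p" "z mod p \<le> N0" using p0 \<open>N0 = p - 1\<close> by auto
      then show ?thesis using ym(3)[of "z mod p"] e by simp
    qed
    then show ?thesis using sh[of "y + i1"] sh[of u] unfolding z_def by simp
  qed
  show ?thesis
    unfolding argmin_on_def
  proof (rule Least_equality)
    show "y + i1 \<in> {i1..i2} \<and> (\<forall>x\<in>{i1..i2}. hmod p a b (y + i1) \<le> hmod p a b x)"
      using ym N0b minx by auto
  next
    fix u assume u: "u \<in> {i1..i2} \<and> (\<forall>x\<in>{i1..i2}. hmod p a b u \<le> hmod p a b x)"
    show "y + i1 \<le> u"
    proof (rule ccontr)
      assume "\<not> y + i1 \<le> u"
      then have lt: "u < y + i1" by simp
      have xin: "y + i1 \<in> {i1..i2}" using ym N0b by auto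
      have h1: "hmod p a b u \<le> hmod p a b (y + i1)" using u xin by blast
      have h2: "hmod p a b (y + i1) \<le> hmod p a b u" using minx u by blast
      have "hmod p a b u = hmod p a b (y + i1)" using h1 h2 by linarith
      then have "(a*(y+i1) + b) mod p = (a*u + b) mod p" unfolding hmod_def by simp
      then have "p dvd (a*(y+i1) + b) - (a*u + b)" by (simp add: mod_eq_dvd_iff)
      then have "p dvd a * (y + i1 - u)" by (simp add: algebra_simps)
      then have "p dvd a \<or> p dvd (y + i1 - u)" using pr by (simp add: prime_dvd_mult_iff)
      moreover have "\<not> p dvd a" using r zdvd_imp_le by fastforce
      moreover have "\<not> p dvd (y + i1 - u)"
      proof
        assume "p dvd (y + i1 - u)"
        then have "p \<le> y + i1 - u" using lt by (intro zdvd_imp_le) auto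
        then show False using u ym N0b by auto
      qed
      ultimately show False by simp
    qed
  qed
qed

lemma log_choice:
  fixes N :: int
  assumes "0 \<le> N"
  shows "\<exists>d::nat. N + 1 \<le> 2^d \<and> real d \<le> log 2 (real_of_int (N+1)) + 1"
proof -
  define x where "x = real_of_int (N+1)"
  have x1: "1 \<le> x" using assms unfolding x_def by simp
  have l0: "0 \<le> log 2 x" using x1 by simp
  define d where "d = nat \<lceil>log 2 x\<rceil>"
  have rd: "real d = of_int \<lceil>log 2 x\<rceil>" unfolding d_def using l0 by simp
  have "x = 2 powr (log 2 x)" using x1 by simp
  also have "\<dots> \<le> 2 powr (real d)" using rd by (intro powr_mono) auto
  also have "\<dots> = 2 ^ d" by (simp add: powr_realpow)
  finally have "real_of_int (N+1) \<le> real_of_int (2^d)" unfolding x_def by simp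
  then have "N + 1 \<le> 2^d" by (simp only: of_int_le_iff)
  moreover have "real d \<le> log 2 x + 1" using rd ceiling_correct[of "log 2 x"] by linarith
  ultimately show ?thesis unfolding x_def by blast
qed

lemma big_bounds:
  fixes p i2 :: int
  assumes "2 \<le> p" "2 \<le> i2"
  shows "(p+1)*(p+1) + 2*p \<le> (p+i2)^4" "115 + 5*p \<le> (p+i2)^4" "(p + i2) * (p + i2) \<le> (p+i2)^4"
    "115 \<le> (p+i2)^4" "p + i2 \<le> (p+i2)^4"
proof -
  define Q where "Q = p + i2"
  have Q4: "4 \<le> Q" using assms unfolding Q_def by simp
  have QQ: "4*Q \<le> Q*Q" using Q4 by (intro mult_right_mono) auto
  have e: "(p+i2)^4 = (Q*Q)*(Q*Q)" unfolding Q_def by (simp add: power4_eq_xxxx)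
  have q16: "16 \<le> Q*Q" using QQ Q4 by linarith
  have "16*(Q*Q) \<le> (Q*Q)*(Q*Q)" using q16 by (intro mult_right_mono) auto
  moreover have "(p+2)*(p+2) \<le> Q*Q" using assms unfolding Q_def by (intro mult_mono) auto
  moreover have "(p+1)*(p+1) + 2*p \<le> (p+2)*(p+2)" by (simp add: algebra_simps)
  moreover have "p + 2 \<le> Q" using assms unfolding Q_def by simp
  ultimately show "(p+1)*(p+1) + 2*p \<le> (p+i2)^4" "115 + 5*p \<le> (p+i2)^4" "(p + i2) * (p + i2) \<le> (p+i2)^4"
    "115 \<le> (p+i2)^4" "p + i2 \<le> (p+i2)^4"
    using e QQ q16 Q4 unfolding Q_def[symmetric] by linarith+
qed

theorem lemma3:
  shows "\<exists>(P :: instr list) (C :: real) (K :: nat).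
    \<forall>(p :: int) (a :: int) (b :: int) (i1 :: int) (i2 :: int).
      prime p \<and> 0 \<le> a \<and> a < p \<and> 0 \<le> b \<and> b < p \<and> 0 < i1 \<and> i1 < i2 \<longrightarrow>
      (\<exists>n :: nat.
         real n \<le> C * log 2 (real_of_int (i2 - i1 + 1)) \<and>
         halted P (run P n (init [p, a, b, i1, i2])) \<and>
         snd (run P n (init [p, a, b, i1, i2])) 0 = argmin_on (hmod p a b) {i1..i2} \<and>
         (\<forall>t \<le> n. \<forall>x. \<bar>snd (run P t (init [p, a, b, i1, i2])) x\<bar> \<le> (p + i2) ^ K))"
proof (rule exI[of _ prog], rule exI[of _ "210::real"], rule exI[of _ "4::nat"], intro allI impI)
  fix p a b i1 i2 :: int
  assume h: "prime p \<and> 0 \<le> a \<and> a < p \<and> 0 \<le> b \<and> b < p \<and> 0 < i1 \<and> i1 < i2"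
  define B where "B = (p + i2)^4"
  have pr: "prime p" and r: "0 \<le> a" "a < p" "0 \<le> b" "b < p" "0 < i1" "i1 < i2" using h by auto
  have p2: "2 \<le> p" using pr prime_ge_2_int by blast
  have i22: "2 \<le> i2" using r by simp
  note bb = big_bounds[OF p2 i22, folded B_def]
  define L where "L = log 2 (real_of_int (i2 - i1 + 1))"
  have L1: "1 \<le> L"
  proof -
    have "log 2 2 \<le> log 2 (real_of_int (i2 - i1 + 1))" using r by (intro log_mono) auto
    then show ?thesis unfolding L_def by simp
  qed
  define Goal where "Goal = (\<lambda>c::config. halted prog c \<and> snd c 0 = argmin_on (hmod p a b) {i1..i2})"
  have ib: "bnd B (snd (init [p, a, b, i1, i2]))"
    by (rule init_bnd) (use bb r p2 in auto)
  have main: "\<exists>k. real k \<le> 210 * L \<and> reach prog B (init [p, a, b, i1, i2]) k Goal"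
  proof (cases "a = 0")
    case True
    have "reach prog B (init [p, a, b, i1, i2]) 10 Goal"
      by (rule reach_mono[OF a0_block[OF ib True]]) (use bb r True argmin_zero[of i1 i2 p b] in \<open>auto simp: Goal_def\<close>)
    moreover have "real (10::nat) \<le> 210 * L" using L1 by simp
    ultimately show ?thesis by blast
  next
    case False
    then have a0: "0 < a" using r by simp
    define N0 where "N0 = (if i2 - i1 < p - 1 then i2 - i1 else p - 1)"
    define c0 where "c0 = (a*i1+b) mod p"
    have N0r: "0 \<le> N0" "N0 \<le> i2 - i1" "N0 \<le> p - 1" using r p2 unfolding N0_def by auto
    obtain d where d: "N0 + 1 \<le> 2^d" "real d \<le> log 2 (real_of_int (N0+1)) + 1"
      using log_choice[OF N0r(1)] by blast
    have "log 2 (real_of_int (N0+1)) \<le> L" unfolding L_def using N0r by (intro log_mono) auto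
    then have dL: "real d \<le> L + 1" using d by simp
    have R1: "reach prog B (init [p, a, b, i1, i2]) 20 (\<lambda>c'. fst c' = 17 \<and> finv i1 B [] p a c0 N0 (snd c'))"
      using init_block[OF p2 a0 r(2-6) bb(3,4) ib] unfolding N0_def c0_def .
    have R2: "reach prog B c' (60 * (d+1) + 5) Goal" if q: "fst c' = 17 \<and> finv i1 B [] p a c0 N0 (snd c')" for c'
    proof -
      have cc: "c' = (17, snd c')" using q by (cases c') auto
      have ml: "reach prog B (17, snd c') (60 * (d+1)) (\<lambda>c''. fst c'' = 53 \<and> common i1 B [] (snd c'') \<and>
         snd c'' 9 = 100 + 5 * int (length ([]::frame list)) \<and> ismin p a c0 N0 (snd c'' 14))"
        by (rule main_loop[OF bb(1,2)]) (use q r p2 N0r d c0_def in auto)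
      have fin: "reach prog B c'' 5 Goal" if q2: "fst c'' = 53 \<and> common i1 B [] (snd c'') \<and>
         snd c'' 9 = 100 + 5 * int (length ([]::frame list)) \<and> ismin p a c0 N0 (snd c'' 14)" for c''
      proof -
        have cc2: "c'' = (53, snd c'')" using q2 by (cases c'') auto
        have ym: "ismin p a c0 N0 (snd c'' 14)" using q2 by simp
        have yb: "0 \<le> snd c'' 14" "snd c'' 14 \<le> N0" using ym unfolding ismin_def by auto
        have am: "argmin_on (hmod p a b) {i1..i2} = snd c'' 14 + i1"
          by (rule argmin_main[OF pr a0 r(2) r(6)]) (use ym in \<open>simp add: N0_def c0_def\<close>)
        have "\<bar>snd c'' 14 + i1\<bar> \<le> B" using yb N0r r bb(5) by (simp add: abs_le_iff)
        then have "reach prog B (53, snd c'') 5 (\<lambda>c. halted prog c \<and> snd c 0 = snd c'' 14 + i1)"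
          using end_block[of i1 B "snd c''" "snd c'' 14"] q2 by simp
        then show ?thesis using cc2 am by (auto simp: Goal_def elim!: reach_mono)
      qed
      show ?thesis using reach_trans[OF ml fin] cc by simp
    qed
    have "reach prog B (init [p, a, b, i1, i2]) (20 + (60 * (d+1) + 5)) Goal"
      by (rule reach_trans[OF R1 R2])
    moreover have "real (20 + (60 * (d+1) + 5)) \<le> 210 * L" using dL L1 by simp
    ultimately show ?thesis by blast
  qed
  then obtain k where k: "real k \<le> 210 * L" "reach prog B (init [p, a, b, i1, i2]) k Goal" by blast
  then obtain n where n: "n \<le> k" "\<forall>t\<le>n. bnd B (snd (run prog t (init [p, a, b, i1, i2])))"
    "Goal (run prog n (init [p, a, b, i1, i2]))" unfolding reach_def by blast
  show "\<exists>n :: nat.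
         real n \<le> 210 * log 2 (real_of_int (i2 - i1 + 1)) \<and>
         halted prog (run prog n (init [p, a, b, i1, i2])) \<and>
         snd (run prog n (init [p, a, b, i1, i2])) 0 = argmin_on (hmod p a b) {i1..i2} \<and>
         (\<forall>t \<le> n. \<forall>x. \<bar>snd (run prog t (init [p, a, b, i1, i2])) x\<bar> \<le> (p + i2) ^ 4)"
  proof (intro exI[of _ n] conjI)
    show "real n \<le> 210 * log 2 (real_of_int (i2 - i1 + 1))" using n(1) k(1) unfolding L_def by linarith
    show "halted prog (run prog n (init [p, a, b, i1, i2]))" using n(3) unfolding Goal_def by simp
    show "snd (run prog n (init [p, a, b, i1, i2])) 0 = argmin_on (hmod p a b) {i1..i2}" using n(3) unfolding Goal_def by simp
    show "\<forall>t \<le> n. \<forall>x. \<bar>snd (run prog t (init [p, a, b, i1, i2])) x\<bar> \<le> (p + i2) ^ 4"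
      using n(2) unfolding bnd_def B_def by blast
  qed
qed


end
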